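(* Let $d\ge 2$, let $r=\sin\!\left(\frac{2\pi}{(d-1)d^2}\right)$, fix $\alpha\in(0,1)$ and put $$\beta=\frac{r^{\frac{(d-1)d}{2}}\left(\frac{d-1}{2d}\right)^d\frac{2}{d-1}}{\prod_{k=1}^{d-1}(r^k+1)}.$$ Then there is a map $R:\mathbb R^{6d-3}\to\mathcal P_d$ (depending only on $d$ and $\alpha$) with the following property. For every nonzero $p\in\mathcal P_d$ and every $\epsilon\in\mathbb R^{6d-3}$ with $\|\epsilon\|_\infty\le\frac{\alpha(\beta\|p\|)^2}{2d-1}$, the polynomial $\tilde p=R(\widetilde{\mathcal A}(p,\epsilon))$ satisfies $$\rho([p],[\tilde p])\le\left(\frac{2+\sqrt2}{\beta^2(1-\alpha)}\,\frac{d-d\tilde C-1+\tilde C^d}{1-\tilde C}\,\sqrt d+\frac{1-\tilde C^d}{2\beta\sqrt{\frac{1}{\sqrt d}(1-\alpha)}}\right)\frac{d(2d-1)}{1-\tilde C}\,\frac{\|\epsilon\|_\infty}{\|p\|},$$ where $\tilde C=\frac{(1+\sqrt2)(2d-1)\|\epsilon\|_\infty+d\|p\|^2}{(\beta\|p\|)^2(1-\alpha)}$.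
   Context: $\mathcal P_d$ is the space of complex polynomials of degree at most $d-1$, regarded as functions on the unit circle $\mathbb T=\{z\in\mathbb C:|z|=1\}$, with inner product $\langle p,q\rangle=\frac1{2\pi}\int_0^{2\pi}p(e^{it})\overline{q(e^{it})}\,dt$. Thus if $p(z)=\sum_{j=0}^{d-1}c_jz^j$ then $\|p\|=\|p\|_2=(\sum_j|c_j|^2)^{1/2}$. Let $\omega=e^{2\pi i/(2d-1)}$ and $\nu=e^{2\pi i/d}$. The magnitude measurement map $\mathcal A:\mathcal P_d\to\mathbb R^{6d-3}$ is $(\mathcal A(p))_j=|p(\omega^j)|^2$ for $1\le j\le 2d-1$, $(\mathcal A(p))_j=|p(\omega^j)-p(\omega^j\nu)|^2$ for $2d\le j\le 4d-2$, and $(\mathcal A(p))_j=|p(\omega^j)-ip(\omega^j\nu)|^2$ for $4d-1\le j\le 6d-3$. For $\epsilon\in\mathbb R^{6d-3}$ the noisy measurements are $\widetilde{\mathcal A}(p,\epsilon)=\mathcal A(p)+\epsilon$, and $\|\epsilon\|_\infty=\max_j|\epsilon_j|$. For $p\in\mathcal P_d$, $[p]=\{cp:|c|=1\}$, and $\rho([p],[q])=\min_{|c|=1}\|p-cq\|$. *)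

theory Defs
  imports "HOL-Analysis.Analysis" "HOL-Computational_Algebra.Polynomial"
begin

definition Pd :: "nat \<Rightarrow> complex poly set" where
  "Pd d = {p. degree p < d}"

text \<open>L2 norm on the circle = l2 norm of the coefficient vector.\<close>
definition pnorm :: "complex poly \<Rightarrow> real" where
  "pnorm p = sqrt (\<Sum>j\<le>degree p. (cmod (coeff p j))\<^sup>2)"

definition rho :: "complex poly \<Rightarrow> complex poly \<Rightarrow> real" where
  "rho p q = (INF c\<in>{c::complex. cmod c = 1}. pnorm (p - smult c q))"

definition omg :: "nat \<Rightarrow> complex" where
  "omg d = cis (2 * pi / real (2 * d - 1))"

definition nu :: "nat \<Rightarrow> complex" where
  "nu d = cis (2 * pi / real d)"

definition meas :: "nat \<Rightarrow> complex poly \<Rightarrow> nat \<Rightarrow> real" where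
  "meas d p j =
    (if 1 \<le> j \<and> j \<le> 2*d - 1 then (cmod (poly p (omg d ^ j)))\<^sup>2
     else if 2*d \<le> j \<and> j \<le> 4*d - 2 then
       (cmod (poly p (omg d ^ j) - poly p (omg d ^ j * nu d)))\<^sup>2
     else if 4*d - 1 \<le> j \<and> j \<le> 6*d - 3 then
       (cmod (poly p (omg d ^ j) - \<i> * poly p (omg d ^ j * nu d)))\<^sup>2
     else 0)"

definition noisy_meas :: "nat \<Rightarrow> complex poly \<Rightarrow> (nat \<Rightarrow> real) \<Rightarrow> nat \<Rightarrow> real" where
  "noisy_meas d p eps j = (if 1 \<le> j \<and> j \<le> 6*d - 3 then meas d p j + eps j else 0)"

definition sup_norm :: "nat \<Rightarrow> (nat \<Rightarrow> real) \<Rightarrow> real" where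
  "sup_norm d eps = Max ((\<lambda>j. \<bar>eps j\<bar>) ` {1..6*d - 3})"

definition rr :: "nat \<Rightarrow> real" where
  "rr d = sin (2 * pi / (real (d - 1) * real d ^ 2))"

definition beta :: "nat \<Rightarrow> real" where
  "beta d = (rr d powr (real ((d - 1) * d) / 2) * ((real d - 1) / (2 * real d)) ^ d
              * (2 / (real d - 1))) / (\<Prod>k=1..d-1. rr d ^ k + 1)"

end

theory Submission
  imports Defs "HOL-Computational_Algebra.Fundamental_Theorem_Algebra"
begin


lemma orth_sum:
  fixes n :: nat and k :: int
  assumes "n > 0"
  shows "(\<Sum>l<n. cis (2 * pi * real l * of_int k / real n)) = (if int n dvd k then of_nat n else 0)"
proof (cases "int n dvd k")
  case True
  then obtain q where q: "k = int n * q" by auto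
  have "\<And>l. cis (2 * pi * real l * of_int k / real n) = 1"
  proof -
    fix l
    have "2 * pi * real l * of_int k / real n = 2 * pi * of_int (int l * q)"
      using assms by (simp add: q field_simps)
    then show "cis (2 * pi * real l * of_int k / real n) = 1" by (simp add: cis_multiple_2pi)
  qed
  then show ?thesis using True by simp
next
  case False
  define w where "w = cis (2 * pi * of_int k / real n)"
  have pw: "\<And>l. cis (2 * pi * real l * of_int k / real n) = w ^ l"
    unfolding w_def Complex.DeMoivre by (rule arg_cong[where f=cis]) (simp add: field_simps)
  have w1: "w \<noteq> 1"
  proof
    assume "w = 1"
    then have "Re w = 1" by simp
    then have "cos (2 * pi * of_int k / real n) = 1" unfolding w_def by simp
    then obtain x::int where "2 * pi * of_int k / real n = of_int x * 2 * pi"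
      unfolding cos_one_2pi_int by blast
    then have x: "2 * pi * of_int k / real n = 2 * pi * of_int x" by simp
    then have "of_int k = real n * of_int x" using assms by (simp add: field_simps)
    then have "k = int n * x" by (metis of_int_eq_iff of_int_mult of_int_of_nat_eq)
    then show False using False by auto
  qed
  have wn: "w ^ n = 1"
    unfolding w_def Complex.DeMoivre using assms
    by (simp add: cis_multiple_2pi)
  have "(\<Sum>l<n. w ^ l) = (w ^ n - 1) / (w - 1)"
    using w1 by (rule geometric_sum)
  then show ?thesis using False wn pw by simp
qed


lemma sum_upto_degree:
  fixes p :: "'a::zero poly"
  assumes "degree p < n" and "\<And>i. f i 0 = 0"
  shows "(\<Sum>i\<le>degree p. f i (coeff p i)) = (\<Sum>i<n. f i (coeff p i))"
proof (rule sum.mono_neutral_left)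
  show "{..degree p} \<subseteq> {..<n}" using assms by auto
  show "\<forall>i\<in>{..<n} - {..degree p}. f i (coeff p i) = 0"
    using assms by (auto simp: coeff_eq_0)
qed auto

lemma poly_sum:
  fixes p :: "complex poly"
  assumes "degree p < n"
  shows "poly p x = (\<Sum>i<n. coeff p i * x ^ i)"
  unfolding poly_altdef by (rule sum_upto_degree[OF assms]) simp

lemma pnorm_sum:
  assumes "degree p < n"
  shows "pnorm p = sqrt (\<Sum>i<n. (cmod (coeff p i))\<^sup>2)"
  unfolding pnorm_def by (subst sum_upto_degree[OF assms]) simp_all

lemma coeff_le_pnorm: "cmod (coeff p i) \<le> pnorm p"
proof -
  have "degree p < max (degree p) i + 1" by simp
  then have "pnorm p = sqrt (\<Sum>j<max (degree p) i + 1. (cmod (coeff p j))\<^sup>2)"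
    by (rule pnorm_sum)
  moreover have "(cmod (coeff p i))\<^sup>2 \<le> (\<Sum>j<max (degree p) i + 1. (cmod (coeff p j))\<^sup>2)"
    by (rule member_le_sum) auto
  ultimately show ?thesis by (metis abs_norm_cancel real_sqrt_abs real_sqrt_le_mono)
qed

lemma pnorm_nonneg: "pnorm p \<ge> 0"
  unfolding pnorm_def by (simp add: sum_nonneg)

lemma pnorm_pos: assumes "p \<noteq> 0" shows "pnorm p > 0"
proof -
  have "0 < cmod (coeff p (degree p))" using assms by simp
  also have "\<dots> \<le> pnorm p" by (rule coeff_le_pnorm)
  finally show ?thesis .
qed

lemma poly_bound:
  assumes "degree p < d" "cmod z = 1"
  shows "cmod (poly p z) \<le> real d * pnorm p"
proof -
  have "cmod (poly p z) = cmod (\<Sum>i<d. coeff p i * z ^ i)" using poly_sum[OF assms(1)] by simp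
  also have "\<dots> \<le> (\<Sum>i<d. cmod (coeff p i * z ^ i))" by (rule norm_sum)
  also have "\<dots> = (\<Sum>i<d. cmod (coeff p i))" using assms(2) by (simp add: norm_mult norm_power)
  also have "\<dots> \<le> (\<Sum>i<d. pnorm p)" by (intro sum_mono coeff_le_pnorm)
  finally show ?thesis by simp
qed

lemma sum_shift_cyc:
  fixes h :: "nat \<Rightarrow> 'a::ab_group_add"
  assumes "h n = h 0"
  shows "(\<Sum>l\<in>{1..n}. h l) = (\<Sum>l<n. h l)"
proof -
  have "(\<Sum>l\<in>{1..n}. h l) = (\<Sum>l<n. h (Suc l))"
    by (simp add: sum.atLeast1_atMost_eq)
  moreover have "h 0 + (\<Sum>l<n. h (Suc l)) = (\<Sum>l<Suc n. h l)"
    by (rule sum.lessThan_Suc_shift[symmetric])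
  moreover have "(\<Sum>l<Suc n. h l) = (\<Sum>l<n. h l) + h n" by simp
  ultimately have "h 0 + (\<Sum>l\<in>{1..n}. h l) = h 0 + (\<Sum>l<n. h l)" using assms by (simp add: add.commute)
  then show ?thesis by simp
qed

lemma cnj_cis_pow: "cnj (cis t) ^ n = cis (- (real n * t))"
  by (simp add: cis_cnj Complex.DeMoivre)

lemma poly_cis:
  assumes "degree f < d"
  shows "poly f (cis t) = (\<Sum>a<d. coeff f a * cis (real a * t))"
  using poly_sum[OF assms] by (simp add: Complex.DeMoivre)

lemma cnj_poly_cis:
  assumes "degree f < d"
  shows "cnj (poly f (cis t)) = (\<Sum>a<d. cnj (coeff f a) * cis (- (real a * t)))"
  using poly_cis[OF assms, of t] by (simp add: cis_cnj)

definition Dir :: "nat \<Rightarrow> complex \<Rightarrow> complex" where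
  "Dir d w = (\<Sum>m<2*d-1. w ^ m) * cnj w ^ (d - 1)"

lemma Dir_cis: "Dir d (cis t) = (\<Sum>m<2*d-1. cis ((real m - real (d - 1)) * t))"
  unfolding Dir_def cnj_cis_pow sum_distrib_right Complex.DeMoivre cis_mult
  by (intro sum.cong refl arg_cong[where f=cis]) (simp add: algebra_simps)

lemma Dir_bound:
  assumes "cmod w = 1"
  shows "cmod (Dir d w) \<le> real (2*d-1)"
proof -
  have "cmod (Dir d w) = cmod (\<Sum>m<2*d-1. w ^ m) * cmod (cnj w ^ (d-1))"
    unfolding Dir_def by (simp add: norm_mult)
  also have "\<dots> = cmod (\<Sum>m<2*d-1. w ^ m)" using assms by (simp add: norm_power)
  also have "\<dots> \<le> (\<Sum>m<2*d-1. cmod (w ^ m))" by (rule norm_sum)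
  also have "\<dots> = real (2*d-1)" using assms by (simp add: norm_power)
  finally show ?thesis .
qed


lemma mono_identity:
  fixes a b d :: nat
  assumes "a < d" "b < d"
  shows "(\<Sum>l<2*d-1. cis (real a * (2*pi*real l/real (2*d-1))) * cis (- (real b * (2*pi*real l/real (2*d-1))))
           * Dir d (cis (t - 2*pi*real l/real (2*d-1))))
         = of_nat (2*d-1) * cis ((real a - real b) * t)"
proof -
  define N where "N = 2*d-1"
  have N0: "N > 0" using assms by (simp add: N_def)
  define m0 where "m0 = a + (d - 1) - b"
  have m0N: "m0 < N" using assms by (simp add: m0_def N_def)
  define k where "k = (\<lambda>m::nat. int a - int b - int m + int (d - 1))"
  have ang: "\<And>l m. real a * (2*pi*real l/real N) + (- (real b * (2*pi*real l/real N)))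
        + (real m - real (d - 1)) * (t - 2*pi*real l/real N)
        = (real m - real (d - 1)) * t + 2 * pi * real l * of_int (k m) / real N"
    using N0 by (simp add: k_def field_simps)
  have "(\<Sum>l<N. cis (real a * (2*pi*real l/real N)) * cis (- (real b * (2*pi*real l/real N)))
           * Dir d (cis (t - 2*pi*real l/real N)))
       = (\<Sum>l<N. \<Sum>m<N. cis ((real m - real (d - 1)) * t) * cis (2 * pi * real l * of_int (k m) / real N))"
    unfolding Dir_cis N_def[symmetric] sum_distrib_left
    by (intro sum.cong refl) (simp only: cis_mult ang)
  also have "\<dots> = (\<Sum>m<N. cis ((real m - real (d - 1)) * t) * (\<Sum>l<N. cis (2 * pi * real l * of_int (k m) / real N)))"
    by (subst sum.swap) (simp add: sum_distrib_left)
  also have "\<dots> = (\<Sum>m<N. if m = m0 then of_nat N * cis ((real m - real (d - 1)) * t) else 0)"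
  proof (intro sum.cong refl)
    fix m assume m: "m \<in> {..<N}"
    have "(int N dvd k m) = (m = m0)"
    proof
      assume dv: "int N dvd k m"
      have "\<bar>k m\<bar> < int N" using m assms by (auto simp: k_def N_def)
      then show "m = m0"
      proof (cases "k m = 0")
        case False
        have "\<bar>int N\<bar> \<le> \<bar>k m\<bar>" by (rule dvd_imp_le_int[OF False dv])
        then show ?thesis using \<open>\<bar>k m\<bar> < int N\<close> by simp
      qed (use assms in \<open>simp add: k_def m0_def\<close>)
    next
      assume "m = m0" then have "k m = 0" using assms by (simp add: k_def m0_def)
      then show "int N dvd k m" by simp
    qed
    then show "cis ((real m - real (d - 1)) * t) * (\<Sum>l<N. cis (2 * pi * real l * of_int (k m) / real N))
          = (if m = m0 then of_nat N * cis ((real m - real (d - 1)) * t) else 0)"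
      using orth_sum[OF N0, of "k m"] by simp
  qed
  also have "\<dots> = of_nat N * cis ((real m0 - real (d - 1)) * t)"
    using m0N by (simp add: sum.delta)
  also have "real m0 - real (d - 1) = real a - real b" using assms by (simp add: m0_def)
  finally show ?thesis by (simp add: N_def)
qed


lemma unit_cis: assumes "cmod z = 1" obtains t where "z = cis t"
proof -
  have "z \<noteq> 0" using assms by auto
  then have "cis (Arg z) = sgn z" by (rule cis_Arg)
  also have "sgn z = z" using assms by (simp add: sgn_div_norm)
  finally show ?thesis using that by metis
qed

lemma omg_pow: "omg d ^ l = cis (2*pi*real l/real (2*d-1))"
  unfolding omg_def Complex.DeMoivre by (rule arg_cong[where f=cis]) simp

lemma nu_pow: "nu d ^ l = cis (2*pi*real l/real d)"
  unfolding nu_def Complex.DeMoivre by (rule arg_cong[where f=cis]) simp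

lemma prod3: "(\<Sum>a\<in>A. X a) * (\<Sum>b\<in>B. Y b) * (D::complex) = (\<Sum>a\<in>A. \<Sum>b\<in>B. X a * Y b * D)"
  by (subst sum_product) (simp only: sum_distrib_right)

lemma interp:
  fixes f g :: "complex poly"
  assumes d1: "d \<ge> 1" and df: "degree f < d" and dg: "degree g < d" and z: "cmod z = 1"
  shows "poly f z * cnj (poly g z) =
    (\<Sum>l<2*d-1. poly f (omg d ^ l) * cnj (poly g (omg d ^ l)) * Dir d (z * cnj (omg d ^ l))) / of_nat (2*d-1)"
proof -
  obtain t where zt: "z = cis t" using unit_cis[OF z] by blast
  define N where "N = 2*d-1"
  have N0: "N > 0" using d1 by (simp add: N_def)
  define F where "F = (\<lambda>a b. coeff f a * cnj (coeff g b))"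
  define G where "G = (\<lambda>a b l. cis (real a * (2*pi*real l/real (2*d-1))) * cis (- (real b * (2*pi*real l/real (2*d-1))))
           * Dir d (cis (t - 2*pi*real l/real (2*d-1))))"
  have trm: "poly f (omg d ^ l) * cnj (poly g (omg d ^ l)) * Dir d (z * cnj (omg d ^ l))
       = (\<Sum>a<d. \<Sum>b<d. F a b * G a b l)" for l
  proof -
    have zc: "z * cnj (omg d ^ l) = cis (t - 2*pi*real l/real (2*d-1))"
      unfolding zt omg_pow cis_cnj cis_mult by simp
    show ?thesis
      unfolding F_def G_def
      by (simp only: zc, simp only: omg_pow poly_cis[OF df] cnj_poly_cis[OF dg] prod3,
          intro sum.cong refl, simp only: mult_ac)
  qed
  have "(\<Sum>l<N. poly f (omg d ^ l) * cnj (poly g (omg d ^ l)) * Dir d (z * cnj (omg d ^ l)))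
      = (\<Sum>l<N. \<Sum>a<d. \<Sum>b<d. F a b * G a b l)" by (rule sum.cong[OF refl], rule trm)
  also have "\<dots> = (\<Sum>a<d. \<Sum>l<N. \<Sum>b<d. F a b * G a b l)" by (rule sum.swap)
  also have "\<dots> = (\<Sum>a<d. \<Sum>b<d. \<Sum>l<N. F a b * G a b l)" by (rule sum.cong[OF refl], rule sum.swap)
  also have "\<dots> = (\<Sum>a<d. \<Sum>b<d. F a b * (of_nat N * cis ((real a - real b) * t)))"
  proof (intro sum.cong refl)
    fix a b assume "a \<in> {..<d}" "b \<in> {..<d}"
    then have "(\<Sum>l<N. G a b l) = of_nat N * cis ((real a - real b) * t)"
      unfolding G_def N_def by (intro mono_identity) auto
    then show "(\<Sum>l<N. F a b * G a b l) = F a b * (of_nat N * cis ((real a - real b) * t))"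
      by (simp add: sum_distrib_left[symmetric])
  qed
  also have "\<dots> = of_nat N * (\<Sum>a<d. \<Sum>b<d. F a b * cis ((real a - real b) * t))"
    by (simp add: sum_distrib_left mult_ac)
  finally have R: "(\<Sum>l<N. poly f (omg d ^ l) * cnj (poly g (omg d ^ l)) * Dir d (z * cnj (omg d ^ l))) / of_nat N
      = (\<Sum>a<d. \<Sum>b<d. F a b * cis ((real a - real b) * t))" using N0 by simp
  have L: "poly f z * cnj (poly g z) = (\<Sum>a<d. \<Sum>b<d. F a b * cis ((real a - real b) * t))"
    unfolding zt poly_cis[OF df] cnj_poly_cis[OF dg] sum_product F_def
    by (intro sum.cong refl) (simp add: mult_ac cis_mult algebra_simps)
  show ?thesis using L R by (simp add: N_def)
qed

lemma dft:
  fixes p :: "complex poly"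
  assumes d1: "d \<ge> 1" and dp: "degree p < d" and z: "cmod z0 = 1" and b: "b < d"
  shows "coeff p b = (\<Sum>k<d. poly p (z0 * nu d ^ k) * cnj (z0 * nu d ^ k) ^ b) / of_nat d"
proof -
  obtain t where zt: "z0 = cis t" using unit_cis[OF z] by blast
  have zk: "z0 * nu d ^ k = cis (t + 2*pi*real k/real d)" for k
    unfolding zt nu_pow cis_mult by simp
  have inner: "(\<Sum>k<d. cis (real a * (t + 2*pi*real k/real d)) * cis (- (real b * (t + 2*pi*real k/real d))))
      = (if a = b then of_nat d else 0)" if a: "a < d" for a
  proof -
    have "(\<Sum>k<d. cis (real a * (t + 2*pi*real k/real d)) * cis (- (real b * (t + 2*pi*real k/real d))))
        = (\<Sum>k<d. cis ((real a - real b) * t) * cis (2 * pi * real k * of_int (int a - int b) / real d))"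
      unfolding cis_mult by (intro sum.cong refl arg_cong[where f=cis]) (simp add: algebra_simps add_divide_distrib diff_divide_distrib)
    also have "\<dots> = cis ((real a - real b) * t) * (if int d dvd (int a - int b) then of_nat d else 0)"
      using d1 by (subst sum_distrib_left[symmetric], subst orth_sum) auto
    also have "(int d dvd (int a - int b)) = (a = b)"
    proof
      assume dv: "int d dvd (int a - int b)"
      show "a = b"
      proof (rule ccontr)
        assume "a \<noteq> b"
        then have "int a - int b \<noteq> 0" by simp
        from dvd_imp_le_int[OF this dv] have "\<bar>int d\<bar> \<le> \<bar>int a - int b\<bar>" .
        then show False using a b by simp
      qed
    qed simp
    finally show ?thesis by simp
  qed
  have "(\<Sum>k<d. poly p (z0 * nu d ^ k) * cnj (z0 * nu d ^ k) ^ b)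
      = (\<Sum>k<d. \<Sum>a<d. coeff p a * (cis (real a * (t + 2*pi*real k/real d)) * cis (- (real b * (t + 2*pi*real k/real d)))))"
    unfolding zk poly_cis[OF dp] cnj_cis_pow sum_distrib_right by (simp add: mult_ac)
  also have "\<dots> = (\<Sum>a<d. coeff p a * (\<Sum>k<d. cis (real a * (t + 2*pi*real k/real d)) * cis (- (real b * (t + 2*pi*real k/real d)))))"
    by (subst sum.swap) (simp add: sum_distrib_left)
  also have "\<dots> = (\<Sum>a<d. if a = b then coeff p a * of_nat d else 0)"
    by (intro sum.cong refl) (simp add: inner)
  also have "\<dots> = coeff p b * of_nat d" using b by (simp add: sum.delta)
  finally show ?thesis using d1 by simp
qed

lemma dft_err:
  fixes p :: "complex poly"
  assumes d1: "d \<ge> 1" and dp: "degree p < d" and z: "cmod z0 = 1" and b: "b < d"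
    and err: "\<And>k. k < d \<Longrightarrow> cmod (v k - c * poly p (z0 * nu d ^ k)) \<le> E"
  shows "cmod ((\<Sum>k<d. v k * cnj (z0 * nu d ^ k) ^ b) / of_nat d - c * coeff p b) \<le> E"
proof -
  have nn: "cmod (nu d) = 1" by (simp add: nu_def)
  have u: "cmod (z0 * nu d ^ k) = 1" for k using z by (simp add: nu_pow norm_mult norm_power)
  have "(\<Sum>k<d. v k * cnj (z0 * nu d ^ k) ^ b) / of_nat d - c * coeff p b
     = (\<Sum>k<d. (v k - c * poly p (z0 * nu d ^ k)) * cnj (z0 * nu d ^ k) ^ b) / of_nat d"
    unfolding dft[OF d1 dp z b] using d1
    by (simp add: sum_distrib_left sum_subtractf algebra_simps diff_divide_distrib)
  also have "cmod \<dots> \<le> E"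
  proof -
    define S where "S = (\<Sum>k<d. (v k - c * poly p (z0 * nu d ^ k)) * cnj (z0 * nu d ^ k) ^ b)"
    have "cmod S \<le> (\<Sum>k<d. cmod ((v k - c * poly p (z0 * nu d ^ k)) * cnj (z0 * nu d ^ k) ^ b))"
      unfolding S_def by (rule norm_sum)
    also have "\<dots> \<le> (\<Sum>k<d. E)"
      using z by (intro sum_mono) (simp add: norm_mult norm_power u err nn)
    finally have "cmod S \<le> real d * E" by simp
    then have "cmod S / real d \<le> real d * E / real d" by (rule divide_right_mono) simp
    then show ?thesis using d1 unfolding S_def[symmetric] by (simp add: norm_divide)
  qed
  finally show ?thesis .
qed


lemma fld: "X \<noteq> 0 \<Longrightarrow> Y \<noteq> 0 \<Longrightarrow> x/X - y/Y = ((Y - X)/Y)*(x/X) + (x-y)/(Y::complex)"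
  by (simp add: field_simps)

lemma sgn_diff_bound:
  fixes x y :: complex
  assumes "y \<noteq> 0"
  shows "cmod (sgn x - sgn y) \<le> 2 * cmod (x - y) / cmod y"
proof (cases "x = 0")
  case True
  then show ?thesis using assms by (simp add: norm_sgn)
next
  case False
  have ny: "cmod y > 0" using assms by simp
  have nx: "cmod x > 0" using False by simp
  have eq: "sgn x - sgn y = of_real ((cmod y - cmod x) / cmod y) * sgn x + (x - y) / of_real (cmod y)"
    using nx ny fld[of "of_real (cmod x)" "of_real (cmod y)" x y] by (simp add: Complex.sgn_eq)
  have "cmod (sgn x - sgn y) \<le> cmod (of_real ((cmod y - cmod x) / cmod y) * sgn x) + cmod ((x - y) / of_real (cmod y))"
    unfolding eq by (rule norm_triangle_ineq)
  also have "\<dots> = \<bar>cmod y - cmod x\<bar> / cmod y + cmod (x - y) / cmod y"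
    using False ny by (simp add: norm_mult norm_sgn norm_divide of_real_diff[symmetric] del: of_real_diff)
  also have "\<bar>cmod y - cmod x\<bar> \<le> cmod (x - y)"
    by (metis norm_minus_commute norm_triangle_ineq3)
  then have "\<bar>cmod y - cmod x\<bar> / cmod y \<le> cmod (x - y) / cmod y"
    by (rule divide_right_mono) simp
  finally show ?thesis by simp
qed

lemma sqrt_err:
  fixes x t :: real
  assumes t: "t > 0"
  shows "\<bar>sqrt (max 0 x) - t\<bar> \<le> \<bar>x - t\<^sup>2\<bar> / t"
proof (cases "x \<le> 0")
  case True
  then have "\<bar>sqrt (max 0 x) - t\<bar> = t" using t by simp
  also have "t = t\<^sup>2 / t" using t by (simp add: power2_eq_square)
  also have "t\<^sup>2 / t \<le> \<bar>x - t\<^sup>2\<bar> / t"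
    using True t by (intro divide_right_mono) auto
  finally show ?thesis .
next
  case False
  then have x: "x > 0" by simp
  have s: "sqrt x \<ge> 0" using x by simp
  have sx: "sqrt x * sqrt x = x" using x by simp
  have "(sqrt x - t) * (sqrt x + t) = x - t\<^sup>2"
    using sx by (simp add: algebra_simps power2_eq_square)
  then have "\<bar>sqrt x - t\<bar> * (sqrt x + t) = \<bar>x - t\<^sup>2\<bar>"
    using s t by (metis abs_mult abs_of_nonneg add_nonneg_nonneg less_imp_le)
  moreover have "\<bar>sqrt x - t\<bar> * t \<le> \<bar>sqrt x - t\<bar> * (sqrt x + t)"
    using s by (intro mult_left_mono) auto
  ultimately have "\<bar>sqrt x - t\<bar> * t \<le> \<bar>x - t\<^sup>2\<bar>" by simp
  then show ?thesis using x t by (simp add: pos_le_divide_eq)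
qed

lemma real_ineq_geo:
  fixes a t :: real
  assumes a1: "a \<le> 1" and a2: "-1 \<le> a" and t0: "t \<ge> 0"
  shows "(2 - 2*a) * (1+t)\<^sup>2 \<le> 16 * (1 - 2*a*t + t\<^sup>2)"
proof -
  define X where "X = a*t"
  define B where "B = t\<^sup>2"
  define C where "C = a*t\<^sup>2"
  have h2: "4*X \<le> 1 + a + B + C"
  proof (cases "a \<le> 0")
    case True
    have "X \<le> 0" using True t0 by (simp add: X_def mult_nonpos_nonneg)
    moreover have "C \<ge> -B" using mult_right_mono[OF a2 zero_le_power2[of t]] by (simp add: C_def B_def)
    ultimately show ?thesis using a2 by linarith
  next
    case False
    have "2*t \<le> 1+t\<^sup>2" using zero_le_square[of "t-1"] by (simp add: power2_eq_square algebra_simps)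
    moreover have "2*a \<le> 1+a" using a1 by simp
    ultimately have "(2*t)*(2*a) \<le> (1+t\<^sup>2)*(1+a)"
      using False t0 by (intro mult_mono) auto
    moreover have "(1+t\<^sup>2)*(1+a) = 1 + a + B + C" by (simp add: B_def C_def algebra_simps)
    moreover have "(2*t)*(2*a) = 4*X" by (simp add: X_def)
    ultimately show ?thesis by linarith
  qed
  have hX: "X \<le> t" using mult_right_mono[OF a1 t0] by (simp add: X_def)
  have hB: "2*t \<le> 1 + B" using zero_le_square[of "t-1"] by (simp add: B_def power2_eq_square algebra_simps)
  have e1: "(2 - 2*a) * (1+t)\<^sup>2 = 2 + 4*t + 2*B - 2*a - 4*X - 2*C"
    by (simp add: X_def B_def C_def power2_eq_square algebra_simps)
  have e2: "16 * (1 - 2*a*t + t\<^sup>2) = 16 - 32*X + 16*B" by (simp add: X_def B_def algebra_simps)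
  show ?thesis unfolding e1 e2 using h2 hX hB by linarith
qed

lemma geo_root:
  fixes z r :: complex
  assumes z: "cmod z = 1" and r: "r \<noteq> 0"
  shows "cmod (z - sgn r) * (1 + cmod r) \<le> 4 * cmod (z - r)"
proof -
  define u where "u = sgn r"
  have u1: "cmod u = 1" using r by (simp add: u_def norm_sgn)
  define w where "w = z * cnj u"
  have w1: "cmod w = 1" using z u1 by (simp add: w_def norm_mult)
  define t where "t = cmod r"
  have t0: "t \<ge> 0" by (simp add: t_def)
  have ru: "r = of_real t * u" using r by (simp add: u_def t_def sgn_div_norm scaleR_conv_of_real)
  have uu: "u * cnj u = 1" using u1 by (metis complex_norm_square mult.commute of_real_1 power_one complex_mult_cnj norm_mult) 
  have zu: "z = w * u" using uu by (simp add: w_def mult.assoc mult.commute)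
  have "z - r = u * (w - of_real t)" by (simp add: zu ru algebra_simps)
  then have e1: "cmod (z - r) = cmod (w - of_real t)" using u1 by (simp add: norm_mult)
  have "z - u = u * (w - 1)" by (simp add: zu algebra_simps)
  then have e2: "cmod (z - u) = cmod (w - 1)" using u1 by (simp add: norm_mult)
  define a where "a = Re w"
  define b where "b = Im w"
  have ab: "a\<^sup>2 + b\<^sup>2 = 1" using w1 by (simp add: a_def b_def cmod_def)
  have a1: "a \<le> 1" "-1 \<le> a" using abs_Re_le_cmod[of w] w1 by (auto simp: a_def)
  have "(cmod (w - of_real t))\<^sup>2 = (Re w - t)\<^sup>2 + (Im w)\<^sup>2" by (simp add: cmod_power2)
  then have s1: "(cmod (w - of_real t))\<^sup>2 = 1 - 2*a*t + t\<^sup>2"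
    using ab by (simp add: a_def b_def power2_eq_square algebra_simps)
  have "(cmod (w - 1))\<^sup>2 = (Re w - 1)\<^sup>2 + (Im w)\<^sup>2" by (simp add: cmod_power2)
  then have s2: "(cmod (w - 1))\<^sup>2 = 2 - 2*a"
    using ab by (simp add: a_def b_def power2_eq_square algebra_simps)
  have "(cmod (w - 1) * (1 + t))\<^sup>2 \<le> (4 * cmod (w - of_real t))\<^sup>2"
    using real_ineq_geo[OF a1 t0] s1 s2 by (simp add: power_mult_distrib)
  then have "cmod (w - 1) * (1 + t) \<le> 4 * cmod (w - of_real t)"
    by (rule power2_le_imp_le) simp
  then show ?thesis using e1 e2 by (simp add: u_def t_def)
qed

definition L1 :: "complex poly \<Rightarrow> real" where
  "L1 p = (\<Sum>i\<le>degree p. cmod (coeff p i))"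

lemma L1_sum: "degree p < n \<Longrightarrow> L1 p = (\<Sum>i<n. cmod (coeff p i))"
  unfolding L1_def by (rule sum_upto_degree) simp_all

lemma pnorm_le_L1: "pnorm p \<le> L1 p"
proof -
  have "pnorm p = L2_set (\<lambda>i. cmod (coeff p i)) {..degree p}"
    by (simp add: pnorm_def L2_set_def)
  also have "\<dots> \<le> L1 p" unfolding L1_def by (rule L2_set_le_sum) simp
  finally show ?thesis .
qed

lemma L1_mult:
  fixes q :: "complex poly"
  shows "L1 ([:-r, 1:] * q) \<le> (1 + cmod r) * L1 q"
proof -
  define n where "n = degree q + 2"
  have e: "[:-r, 1:] * q = smult (-r) q + pCons 0 q" by simp
  have d1: "degree ([:-r, 1:] * q) < n"
    using degree_mult_le[of "[:-r, 1:]" q] by (simp add: n_def)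
  have "L1 ([:-r, 1:] * q) = (\<Sum>i<n. cmod (coeff ([:-r, 1:] * q) i))" by (rule L1_sum[OF d1])
  also have "\<dots> \<le> (\<Sum>i<n. cmod r * cmod (coeff q i) + cmod (coeff (pCons 0 q) i))"
    unfolding e by (intro sum_mono, simp only: coeff_add coeff_smult, rule order_trans[OF norm_triangle_ineq], simp add: norm_mult)
  also have "\<dots> = cmod r * (\<Sum>i<n. cmod (coeff q i)) + (\<Sum>i<n. cmod (coeff (pCons 0 q) i))"
    by (simp add: sum.distrib sum_distrib_left)
  also have "(\<Sum>i<n. cmod (coeff q i)) = L1 q" by (rule L1_sum[symmetric]) (simp add: n_def)
  also have "(\<Sum>i<n. cmod (coeff (pCons 0 q) i)) = L1 q"
  proof -
    have "(\<Sum>i<n. cmod (coeff (pCons 0 q) i)) = (\<Sum>i<Suc (degree q + 1). cmod (coeff (pCons 0 q) i))"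
      by (simp add: n_def)
    also have "\<dots> = cmod (coeff (pCons 0 q) 0) + (\<Sum>i<degree q + 1. cmod (coeff (pCons 0 q) (Suc i)))"
      by (rule sum.lessThan_Suc_shift)
    also have "\<dots> = (\<Sum>i<degree q + 1. cmod (coeff q i))" by simp
    also have "\<dots> = L1 q" by (rule L1_sum[symmetric]) simp
    finally show ?thesis .
  qed
  finally show ?thesis by (simp add: algebra_simps)
qed

lemma root_lower:
  fixes p :: "complex poly"
  assumes "p \<noteq> 0" "cmod z = 1" "0 < \<delta>" "\<delta> \<le> 1"
    and "\<forall>r. poly p r = 0 \<longrightarrow> r \<noteq> 0 \<longrightarrow> \<delta> \<le> cmod (z - sgn r)"
  shows "(\<delta>/4) ^ degree p * L1 p \<le> cmod (poly p z)"
  using assms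
proof (induction "degree p" arbitrary: p)
  case 0
  then have "L1 p = cmod (coeff p 0)" by (simp add: L1_def)
  moreover have "poly p z = coeff p 0" using 0 by (simp add: poly_altdef)
  ultimately show ?case using 0 by simp
next
  case (Suc m)
  have "\<not> constant (poly p)" using Suc(2) by (simp add: constant_degree)
  then obtain r where r: "poly p r = 0" using fundamental_theorem_of_algebra by blast
  define q where "q = synthetic_div p r"
  have pq: "p = [:-r, 1:] * q" using synthetic_div_correct'[of r p] r by (simp add: q_def)
  have q0: "q \<noteq> 0" using pq Suc(3) by auto
  have dm: "degree ([:-r, 1:] * q) = degree [:-r, 1:] + degree q" using q0 by (intro degree_mult_eq) auto
  have dq: "degree p = 1 + degree q" unfolding pq by (simp only: dm) simp
  then have m: "m = degree q" using Suc(2) by simp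
  have rq: "\<forall>s. poly q s = 0 \<longrightarrow> s \<noteq> 0 \<longrightarrow> \<delta> \<le> cmod (z - sgn s)"
    using Suc(7) pq by (auto simp: poly_mult)
  have IH: "(\<delta>/4) ^ degree q * L1 q \<le> cmod (poly q z)"
    using Suc(1)[OF m q0 Suc(4) Suc(5) Suc(6) rq] .
  have zr: "(\<delta>/4) * (1 + cmod r) \<le> cmod (z - r)"
  proof (cases "r = 0")
    case True
    then show ?thesis using Suc(4) Suc(6) by simp
  next
    case False
    have "\<delta> \<le> cmod (z - sgn r)" using Suc(7) r False by blast
    then have "\<delta> * (1 + cmod r) \<le> cmod (z - sgn r) * (1 + cmod r)"
      by (intro mult_right_mono) auto
    also have "\<dots> \<le> 4 * cmod (z - r)" by (rule geo_root[OF Suc(4) False])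
    finally show ?thesis by simp
  qed
  have "poly p z = (z - r) * poly q z" by (subst pq) (simp add: algebra_simps)
  then have pz: "cmod (poly p z) = cmod (z - r) * cmod (poly q z)" by (simp add: norm_mult)
  have L: "L1 p \<le> (1 + cmod r) * L1 q" unfolding pq by (rule L1_mult)
  have d0: "\<delta>/4 \<ge> 0" using Suc(5) by simp
  have "(\<delta>/4) ^ degree p * L1 p \<le> (\<delta>/4) ^ degree p * ((1 + cmod r) * L1 q)"
    using L d0 by (intro mult_left_mono) auto
  also have "\<dots> = ((\<delta>/4) * (1 + cmod r)) * ((\<delta>/4) ^ degree q * L1 q)"
    using dq by (simp add: algebra_simps)
  also have "\<dots> \<le> cmod (z - r) * cmod (poly q z)"
    using zr IH d0 by (intro mult_mono) (auto simp: L1_def sum_nonneg)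
  finally show ?case using pz by simp
qed


lemma zeta_cis:
  assumes "d \<ge> 1"
  shows "omg d ^ j * nu d ^ k = cis (2*pi * of_int (int j * int d + int k * int (2*d-1)) / real (d*(2*d-1)))"
proof -
  have N0: "real (2*d-1) > 0" using assms by simp
  have d0: "real d > 0" using assms by simp
  show ?thesis unfolding omg_pow nu_pow cis_mult
    using N0 d0 by (intro arg_cong[where f=cis]) (simp add: field_simps)
qed

lemma chord1: "cmod (cis x - 1) = 2 * \<bar>sin (x/2)\<bar>"
proof -
  have c: "cos x = 1 - 2 * sin (x/2) ^ 2" using cos_double_sin[of "x/2"] by simp
  have "(cmod (cis x - 1))\<^sup>2 = (cos x - 1)\<^sup>2 + (sin x)\<^sup>2" by (simp add: cmod_power2)
  also have "\<dots> = 2 - 2 * cos x" using sin_cos_squared_add[of x] by (simp add: power2_eq_square algebra_simps)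
  also have "\<dots> = (2 * \<bar>sin (x/2)\<bar>)\<^sup>2" unfolding c by (simp add: power2_eq_square)
  finally show ?thesis by (rule power2_eq_imp_eq) simp_all
qed

lemma sin_ge:
  fixes M s :: nat
  assumes "1 \<le> s" "s < M"
  shows "sin (pi / real M) \<le> sin (pi * real s / real M)"
proof -
  have M0: "real M > 0" using assms by simp
  show ?thesis
  proof (cases "2 * s \<le> M")
    case True
    show ?thesis
    proof (rule sin_monotone_2pi_le)
      have "0 \<le> pi / real M" using M0 by simp
      then show "- (pi / 2) \<le> pi / real M" using pi_gt_zero by linarith
      show "pi / real M \<le> pi * real s / real M" using assms M0 by (simp add: divide_right_mono)
      have "real s / real M \<le> 1/2" using True M0 by (simp add: field_simps)
      then have "pi * (real s / real M) \<le> pi * (1/2)" by (intro mult_left_mono) auto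
      then show "pi * real s / real M \<le> pi / 2" by simp
    qed
  next
    case False
    have "sin (pi * real s / real M) = sin (pi - pi * real s / real M)" by simp
    also have "pi - pi * real s / real M = pi * real (M - s) / real M"
      using assms M0 by (simp add: field_simps of_nat_diff)
    finally have e: "sin (pi * real s / real M) = sin (pi * real (M - s) / real M)" .
    show ?thesis
    proof -
      have "sin (pi / real M) \<le> sin (pi * real (M - s) / real M)"
      proof (rule sin_monotone_2pi_le)
        have "0 \<le> pi / real M" using M0 by simp
        then show "- (pi / 2) \<le> pi / real M" using pi_gt_zero by linarith
        show "pi / real M \<le> pi * real (M - s) / real M" using assms M0 by (simp add: divide_right_mono)
        have "real (M - s) / real M \<le> 1/2" using False assms M0 by (simp add: field_simps of_nat_diff)
        then have "pi * (real (M - s) / real M) \<le> pi * (1/2)" by (intro mult_left_mono) auto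
        then show "pi * real (M - s) / real M \<le> pi / 2" by simp
      qed
      then show ?thesis using e by simp
    qed
  qed
qed

lemma chord_int:
  fixes M :: nat and t :: int
  assumes M: "M \<ge> 2" and nd: "\<not> int M dvd t"
  shows "2 * sin (pi / real M) \<le> cmod (cis (2*pi * of_int t / real M) - 1)"
proof -
  define s where "s = t mod int M"
  define q where "q = t div int M"
  have ts: "t = int M * q + s" by (simp add: s_def q_def)
  have s0: "0 \<le> s" "s < int M" using M by (simp_all add: s_def)
  have sn0: "s \<noteq> 0" using nd by (simp add: s_def dvd_eq_mod_eq_0)
  define n where "n = nat s"
  have ns: "s = int n" using s0 by (simp add: n_def)
  have n1: "1 \<le> n" "n < M" using s0 sn0 ns by auto
  have M0: "real M > 0" using M by simp
  have "cis (2*pi * of_int t / real M) = cis (2*pi*real n / real M) * cis (2*pi * of_int q)"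
    unfolding cis_mult using M0 by (intro arg_cong[where f=cis]) (simp add: ts ns field_simps)
  also have "cis (2*pi * of_int q) = 1" by (simp add: cis_multiple_2pi)
  finally have e: "cis (2*pi * of_int t / real M) = cis (2*pi*real n / real M)" by simp
  have "cmod (cis (2*pi*real n / real M) - 1) = 2 * \<bar>sin (pi * real n / real M)\<bar>"
    unfolding chord1 by simp
  also have "\<bar>sin (pi * real n / real M)\<bar> = sin (pi * real n / real M)"
  proof (rule abs_of_nonneg, rule sin_ge_zero)
    show "0 \<le> pi * real n / real M" using M0 by simp
    have "real n / real M \<le> 1" using n1 M0 by simp
    then have "pi * (real n / real M) \<le> pi * 1" by (intro mult_left_mono) auto
    then show "pi * real n / real M \<le> pi" by simp
  qed
  finally have "cmod (cis (2*pi*real n / real M) - 1) = 2 * sin (pi * real n / real M)" .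
  moreover have "sin (pi / real M) \<le> sin (pi * real n / real M)" using sin_ge n1 by blast
  ultimately show ?thesis using e by simp
qed

lemma cis_diff_factor: "cis a - cis b = cis b * (cis (a - b) - 1)"
  by (simp add: algebra_simps cis_mult)

lemma sep:
  assumes d: "d \<ge> 2" and j: "j \<in> {1..2*d-1}" and j': "j' \<in> {1..2*d-1}" and jj: "j \<noteq> j'"
  shows "2 * sin (pi / real (d*(2*d-1))) \<le> cmod (omg d ^ j * nu d ^ k - omg d ^ j' * nu d ^ k')"
proof -
  define N where "N = 2*d-1"
  define M where "M = d*(2*d-1)"
  define A where "A = int j * int d + int k * int N"
  define B where "B = int j' * int d + int k' * int N"
  have "1 \<le> 2*d-1" using d by simp
  from mult_le_mono2[OF this, of d] have "d \<le> d * (2*d-1)" by simp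
  then have M2: "M \<ge> 2" using d unfolding M_def by linarith
  have nd: "\<not> int M dvd (A - B)"
  proof
    assume dv: "int M dvd (A - B)"
    have "int N dvd int M" by (simp add: M_def N_def)
    then have "int N dvd (A - B)" using dv by (rule dvd_trans)
    moreover have "A - B = (int j - int j') * int d + (int k - int k') * int N"
      by (simp add: A_def B_def algebra_simps)
    ultimately have "int N dvd (int j - int j') * int d" by (simp add: dvd_add_left_iff)
    then have "int N dvd (int j - int j') * int d * 2" by simp
    moreover have "(int j - int j') * int d * 2 = (int j - int j') * int N + (int j - int j')"
      using d by (simp add: N_def algebra_simps of_nat_diff)
    ultimately have "int N dvd (int j - int j')" by (simp add: dvd_add_right_iff)
    moreover have "int j - int j' \<noteq> 0" using jj by simp
    ultimately have "\<bar>int N\<bar> \<le> \<bar>int j - int j'\<bar>" using dvd_imp_le_int by blast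
    then show False using j j' d by (auto simp: N_def of_nat_diff abs_if split: if_splits)
  qed
  have d1: "d \<ge> 1" using d by simp
  have "omg d ^ j * nu d ^ k - omg d ^ j' * nu d ^ k'
      = cis (2*pi * of_int A / real M) - cis (2*pi * of_int B / real M)"
    unfolding zeta_cis[OF d1] by (simp add: A_def B_def M_def N_def)
  also have "\<dots> = cis (2*pi * of_int B / real M) * (cis (2*pi * of_int A / real M - 2*pi * of_int B / real M) - 1)"
    by (rule cis_diff_factor)
  also have "2*pi * of_int A / real M - 2*pi * of_int B / real M = 2*pi * of_int (A - B) / real M"
    by (simp add: diff_divide_distrib right_diff_distrib)
  finally have "omg d ^ j * nu d ^ k - omg d ^ j' * nu d ^ k'
      = cis (2*pi * of_int B / real M) * (cis (2*pi * of_int (A - B) / real M) - 1)" .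
  then have "cmod (omg d ^ j * nu d ^ k - omg d ^ j' * nu d ^ k') = cmod (cis (2*pi * of_int (A - B) / real M) - 1)"
    by (simp add: norm_mult)
  moreover have "2 * sin (pi / real M) \<le> cmod (cis (2*pi * of_int (A - B) / real M) - 1)"
    by (rule chord_int[OF M2 nd])
  ultimately show ?thesis by (simp add: M_def)
qed


lemma good_orbit:
  assumes d: "d \<ge> 2" and p0: "p \<noteq> 0" and dp: "degree p < d"
  shows "\<exists>j\<in>{1..2*d-1}. \<forall>k<d. \<forall>r. poly p r = 0 \<longrightarrow> r \<noteq> 0 \<longrightarrow>
           sin (pi / real (d*(2*d-1))) \<le> cmod (omg d ^ j * nu d ^ k - sgn r)"
proof (rule ccontr)
  define \<delta> where "\<delta> = sin (pi / real (d*(2*d-1)))"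
  define N where "N = 2*d-1"
  define U where "U = sgn ` {r. poly p r = 0 \<and> r \<noteq> 0}"
  assume "\<not> ?thesis"
  then have b0: "\<forall>j\<in>{1..N}. \<exists>k<d. \<exists>r. poly p r = 0 \<and> r \<noteq> 0 \<and> cmod (omg d ^ j * nu d ^ k - sgn r) < \<delta>"
    unfolding \<delta>_def N_def by (auto simp: not_le)
  have bad: "\<forall>j\<in>{1..N}. \<exists>u\<in>U. \<exists>k<d. cmod (omg d ^ j * nu d ^ k - u) < \<delta>"
  proof
    fix j assume "j \<in> {1..N}"
    then obtain k r where "k < d" "poly p r = 0" "r \<noteq> 0" "cmod (omg d ^ j * nu d ^ k - sgn r) < \<delta>"
      using b0 by blast
    then show "\<exists>u\<in>U. \<exists>k<d. cmod (omg d ^ j * nu d ^ k - u) < \<delta>"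
      by (intro bexI[of _ "sgn r"]) (auto simp: U_def)
  qed
  define f where "f j = (SOME u. u \<in> U \<and> (\<exists>k<d. cmod (omg d ^ j * nu d ^ k - u) < \<delta>))" for j
  have fj: "f j \<in> U \<and> (\<exists>k<d. cmod (omg d ^ j * nu d ^ k - f j) < \<delta>)" if "j \<in> {1..N}" for j
    unfolding f_def by (rule someI_ex) (use bad that in blast)
  have inj: "inj_on f {1..N}"
  proof (rule inj_onI)
    fix j j' assume j: "j \<in> {1..N}" and j': "j' \<in> {1..N}" and e: "f j = f j'"
    show "j = j'"
    proof (rule ccontr)
      assume jj: "j \<noteq> j'"
      obtain k where k: "cmod (omg d ^ j * nu d ^ k - f j) < \<delta>" using fj[OF j] by blast
      obtain k' where k': "cmod (omg d ^ j' * nu d ^ k' - f j) < \<delta>" using fj[OF j'] e by auto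
      have "2 * \<delta> \<le> cmod (omg d ^ j * nu d ^ k - omg d ^ j' * nu d ^ k')"
        unfolding \<delta>_def using sep[OF d _ _ jj] j j' by (simp add: N_def)
      also have "\<dots> \<le> cmod (omg d ^ j * nu d ^ k - f j) + cmod (omg d ^ j' * nu d ^ k' - f j)"
      proof -
        have "omg d ^ j * nu d ^ k - omg d ^ j' * nu d ^ k' = (omg d ^ j * nu d ^ k - f j) - (omg d ^ j' * nu d ^ k' - f j)"
          by simp
        then show ?thesis by (metis norm_triangle_ineq4)
      qed
      finally show False using k k' by simp
    qed
  qed
  have fU: "f ` {1..N} \<subseteq> U" using fj by auto
  have finR: "finite {r. poly p r = 0}" using poly_roots_finite[OF p0] .
  have finU: "finite U" unfolding U_def using finR by (auto intro: finite_subset)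
  have "card {1..N} \<le> card U" by (rule card_inj_on_le[OF inj fU finU])
  also have "card U \<le> card {r. poly p r = 0 \<and> r \<noteq> 0}" unfolding U_def
    by (rule card_image_le) (use finR in \<open>auto intro: finite_subset\<close>)
  also have "\<dots> \<le> card {r. poly p r = 0}" by (rule card_mono[OF finR]) auto
  also have "\<dots> \<le> degree p" by (rule card_poly_roots_bound[OF p0])
  finally have "N \<le> degree p" by simp
  then show False using dp d by (simp add: N_def)
qed

lemma sin_M_pos:
  assumes d: "d \<ge> 2"
  shows "0 < sin (pi / real (d*(2*d-1)))" "sin (pi / real (d*(2*d-1))) \<le> 1"
proof -
  have "1 \<le> 2*d-1" using d by simp
  from mult_le_mono2[OF this, of d] have "d \<le> d * (2*d-1)" by simp
  then have M2: "real (d*(2*d-1)) \<ge> 2" using d by linarith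
  show "0 < sin (pi / real (d*(2*d-1)))"
  proof (rule sin_gt_zero)
    show "0 < pi / real (d*(2*d-1))" using M2 pi_gt_zero by (intro divide_pos_pos) linarith+
    have "pi / real (d*(2*d-1)) \<le> pi / 2" using M2 pi_gt_zero by (intro divide_left_mono) linarith+
    moreover have "pi / 2 < pi" using pi_gt_zero by simp
    ultimately show "pi / real (d*(2*d-1)) < pi" by (rule le_less_trans)
  qed
  show "sin (pi / real (d*(2*d-1))) \<le> 1" by simp
qed

lemma lower_bound:
  assumes d: "d \<ge> 2" and p0: "p \<noteq> 0" and dp: "degree p < d"
  shows "\<exists>j\<in>{1..2*d-1}. \<forall>k<d. (sin (pi / real (d*(2*d-1))) / 4) ^ (d-1) * pnorm p
            \<le> cmod (poly p (omg d ^ j * nu d ^ k))"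
proof -
  define \<delta> where "\<delta> = sin (pi / real (d*(2*d-1)))"
  obtain j where j: "j \<in> {1..2*d-1}" and g: "\<forall>k<d. \<forall>r. poly p r = 0 \<longrightarrow> r \<noteq> 0 \<longrightarrow> \<delta> \<le> cmod (omg d ^ j * nu d ^ k - sgn r)"
    using good_orbit[OF d p0 dp] unfolding \<delta>_def by blast
  have dpos: "0 < \<delta>" "\<delta> \<le> 1" using sin_M_pos[OF d] by (simp_all add: \<delta>_def)
  have "\<forall>k<d. (\<delta> / 4) ^ (d-1) * pnorm p \<le> cmod (poly p (omg d ^ j * nu d ^ k))"
  proof (intro allI impI)
    fix k assume k: "k < d"
    have z1: "cmod (omg d ^ j * nu d ^ k) = 1" by (simp add: omg_pow nu_pow norm_mult)
    have rl: "(\<delta>/4) ^ degree p * L1 p \<le> cmod (poly p (omg d ^ j * nu d ^ k))"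
      by (rule root_lower[OF p0 z1 dpos]) (use g k in blast)
    have "(\<delta>/4) ^ (d-1) \<le> (\<delta>/4) ^ degree p"
      using dp dpos by (intro power_decreasing) auto
    moreover have "pnorm p \<le> L1 p" by (rule pnorm_le_L1)
    ultimately have "(\<delta>/4) ^ (d-1) * pnorm p \<le> (\<delta>/4) ^ degree p * L1 p"
      using dpos pnorm_nonneg by (intro mult_mono) auto
    then show "(\<delta> / 4) ^ (d-1) * pnorm p \<le> cmod (poly p (omg d ^ j * nu d ^ k))" using rl by linarith
  qed
  then show ?thesis using j unfolding \<delta>_def by blast
qed


lemma sin_lb:
  fixes y :: real
  assumes "0 \<le> y"
  shows "y - y^3/6 \<le> sin y"
proof -
  have "\<bar>sin y - (\<Sum>m<3. sin_coeff m * y ^ m)\<bar> \<le> inverse (fact 3) * \<bar>y\<bar> ^ 3"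
    by (rule Maclaurin_sin_bound)
  moreover have "(\<Sum>m<3. sin_coeff m * y ^ m) = y"
    by (simp add: sin_coeff_def eval_nat_numeral)
  moreover have "inverse (fact 3) * \<bar>y\<bar> ^ 3 = y^3/6"
    using assms by (simp add: eval_nat_numeral)
  ultimately show ?thesis by linarith
qed

lemma rr_props:
  assumes d: "d \<ge> 2"
  shows "0 < rr d" "rr d \<le> 1" "rr d \<le> 2*pi/(real (d-1) * real d ^ 2)"
proof -
  define x where "x = 2*pi/(real (d-1) * real d ^ 2)"
  have D: "real (d-1) * real d ^ 2 \<ge> 4"
  proof -
    have a: "real (d-1) \<ge> 1" using d by (simp add: of_nat_diff)
    have "(2::real)^2 \<le> real d ^ 2" using d by (intro power_mono) auto
    then have b: "real d ^ 2 \<ge> 4" by simp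
    have "1 * 4 \<le> real (d-1) * real d ^ 2" using a b by (intro mult_mono) auto
    then show ?thesis by linarith
  qed
  have x0: "0 < x" unfolding x_def using D pi_gt_zero by (intro divide_pos_pos) linarith+
  have "x \<le> 2*pi/4" unfolding x_def using D pi_gt_zero by (intro divide_left_mono) linarith+
  then have xpi: "x < pi" using pi_gt_zero x0 by linarith
  show "0 < rr d" unfolding rr_def x_def[symmetric] using x0 xpi by (rule sin_gt_zero)
  show "rr d \<le> 1" by (simp add: rr_def)
  show "rr d \<le> 2*pi/(real (d-1) * real d ^ 2)" unfolding rr_def x_def[symmetric]
    using x0 by (simp add: sin_x_le_x)
qed

lemma prod_rr_ge1:
  assumes "0 \<le> r"
  shows "1 \<le> (\<Prod>k=1..n. r ^ k + (1::real))"
  using assms by (intro prod_ge_1) simp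

lemma beta_pos:
  assumes d: "d \<ge> 2"
  shows "0 < beta d"
proof -
  have r: "0 < rr d" using rr_props[OF d] by simp
  have "0 < rr d powr (real ((d - 1) * d) / 2)" using r by simp
  moreover have "0 < ((real d - 1) / (2 * real d)) ^ d" using d by simp
  moreover have "0 < 2 / (real d - 1)" using d by simp
  moreover have "0 < (\<Prod>k=1..d-1. rr d ^ k + 1)" using prod_rr_ge1[of "rr d" "d-1"] r by linarith
  ultimately show ?thesis unfolding beta_def by simp
qed

lemma beta_le_d2: "beta 2 \<le> (sin (pi / real (2*(2*2-1))) / 4) ^ (2-1) / 2"
proof -
  have "rr 2 = 1" by (simp add: rr_def)
  then have "beta 2 = 1/16" by (simp add: beta_def power2_eq_square)
  moreover have "sin (pi / real (2*(2*2-1))) = 1/2" using sin_30 by simp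
  ultimately show ?thesis by simp
qed


lemma beta_le_d3: "beta 3 \<le> (sin (pi / real (3*(2*3-1))) / 4) ^ (3-1) / 2"
proof -
  define r where "r = rr 3"
  have rdef: "r = sin (pi/9)" by (simp add: r_def rr_def)
  have pa: "(314159/100000) \<le> pi" "pi \<le> (31416/10000)"
    using order_trans[OF _ pi_approx(1), of "(314159/100000)"] order_trans[OF pi_approx(2), of "(31416/10000)"] by simp_all
  have r_ub: "r \<le> (35/100)"
  proof -
    have "r \<le> pi/9" unfolding rdef using pi_gt_zero by (intro sin_x_le_x) simp
    then show ?thesis using pa by linarith
  qed
  have r_lb: "(34/100) \<le> r"
  proof -
    have y0: "0 \<le> pi/9" using pi_gt_zero by simp
    have "pi/9 - (pi/9)^3/6 \<le> r" unfolding rdef by (rule sin_lb[OF y0])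
    moreover have "(pi/9)^3 \<le> (35/100)^3" using pa y0 by (intro power_mono) auto
    moreover have "(35/100::real)^3 = 42875/1000000" by (simp add: power_divide eval_nat_numeral)
    ultimately show ?thesis using pa by linarith
  qed
  have r0: "0 < r" using r_lb by simp
  have b3: "beta 3 = r^3 / 27 / ((r + 1) * (r^2 + 1))"
  proof -
    have e1: "real ((3-1)*3::nat) / 2 = (3::real)" by simp
    have e2: "rr 3 powr (real ((3-1)*3::nat) / 2) = r^3" using r0 unfolding e1 r_def by simp
    have e3: "((real (3::nat) - 1) / (2 * real (3::nat)))^3 = (1/27::real)" by (simp add: power_divide)
    have e4: "2 / (real (3::nat) - 1) = (1::real)" by simp
    have "{1..3-1::nat} = {1, 2}" by auto
    then have e5: "(\<Prod>k=1..3-1. rr 3 ^ k + 1) = (r + 1) * (r^2 + 1)" by (simp add: r_def)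
    show ?thesis unfolding beta_def e2 e3 e4 e5 by simp
  qed
  have num: "r^3 \<le> (35/100)^3" using r_ub r0 by (intro power_mono) auto
  have den: "(134/100) * (11156/10000) \<le> (r + 1) * (r^2 + 1)"
  proof -
    have "(34/100)^2 \<le> r^2" using r_lb by (intro power_mono) auto
    then have "(11156/10000) \<le> r^2 + 1" by (simp add: power_divide eval_nat_numeral)
    moreover have "(134/100) \<le> r + 1" using r_lb by simp
    ultimately show ?thesis by (intro mult_mono) auto
  qed
  have L: "beta 3 \<le> (35/100)^3 / 27 / ((134/100) * (11156/10000))"
    unfolding b3 using num den r0
    by (intro divide_mono divide_right_mono) (auto intro: mult_pos_pos)
  define s where "s = sin (pi / 15)"
  have s_lb: "(2077/10000) \<le> s"
  proof -
    have y0: "0 \<le> pi/15" using pi_gt_zero by simp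
    have "pi/15 - (pi/15)^3/6 \<le> s" unfolding s_def by (rule sin_lb[OF y0])
    moreover have "(pi/15)^3 \<le> (21/100)^3" using pa y0 by (intro power_mono) auto
    moreover have "(21/100::real)^3 = 9261/1000000" by (simp add: power_divide eval_nat_numeral)
    ultimately show ?thesis using pa by linarith
  qed
  have R: "((2077/10000)/4)^2/2 \<le> (s/4)^2/2" using s_lb by (intro divide_right_mono power_mono) auto
  have "(sin (pi / real (3*(2*3-1))) / 4) ^ (3-1) / 2 = (s/4)^2/2" by (simp add: s_def)
  moreover have "(35/100)^3 / 27 / ((134/100) * (11156/10000)) \<le> (((2077/10000)::real)/4)^2/2" by (simp add: power_divide eval_nat_numeral)
  ultimately show ?thesis using L R by linarith
qed


lemma beta_le_d4:
  assumes d: "d \<ge> 4"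
  shows "beta d \<le> (sin (pi / real (d*(2*d-1))) / 4) ^ (d-1) / 2"
proof -
  have d2: "d \<ge> 2" using d by simp
  define r where "r = rr d"
  define x where "x = 2*pi/(real (d-1) * real d ^ 2)"
  define M where "M = real (d*(2*d-1))"
  define \<delta> where "\<delta> = sin (pi / M)"
  have r0: "0 < r" and r1: "r \<le> 1" and rx: "r \<le> x" using rr_props[OF d2] by (simp_all add: r_def x_def)
  have D: "real d \<ge> 4" using d by simp
  have Mv: "M = real d * (2 * real d - 1)" using d by (simp add: M_def of_nat_diff)
  have M28: "M \<ge> 28"
  proof -
    have "2 * real d - 1 \<ge> 7" using D by simp
    then have "real d * (2 * real d - 1) \<ge> 4 * 7" using D by (intro mult_mono) auto
    then show ?thesis using Mv by simp
  qed
  have pa: "(314159/100000) \<le> pi" "pi \<le> (31416/10000)"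
    using order_trans[OF _ pi_approx(1), of "(314159/100000)"] order_trans[OF pi_approx(2), of "(31416/10000)"] by simp_all
  have dl: "1 / (2*M) \<le> \<delta> / 4"
  proof -
    define y where "y = pi / M"
    have y0: "0 \<le> y" using M28 by (simp add: y_def)
    have y1: "y \<le> 1" using M28 pa by (simp add: y_def field_simps)
    have "y*y \<le> 1" using y0 y1 by (simp add: mult_le_one)
    then have "y*y*y \<le> 1*y" using y0 by (intro mult_right_mono) auto
    then have "y^3 \<le> y" by (simp add: power3_eq_cube)
    then have "5*y/6 \<le> \<delta>" using sin_lb[OF y0] by (simp add: \<delta>_def y_def[symmetric])
    moreover have "2 / M \<le> 5*y/6" using M28 pa by (simp add: y_def field_simps)
    ultimately have "2 / M \<le> \<delta>" by linarith
    then have le: "(2 / M) / 4 \<le> \<delta> / 4" by (rule divide_right_mono) simp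
    have eq: "1 / (2*M) = (2 / M) / 4" by simp
    show ?thesis by (subst eq) (rule le)
  qed
  have a: "r powr (real ((d - 1) * d) / 2) \<le> r ^ (2*(d-1))"
  proof -
    have "real (2*(d-1)) \<le> real ((d - 1) * d) / 2"
    proof -
      have "(d-1)*4 \<le> (d-1)*d" using d by (intro mult_le_mono2) simp
      then have "2*(2*(d-1)) \<le> (d-1)*d" by simp
      then have "real (2*(2*(d-1))) \<le> real ((d-1)*d)" by (simp only: of_nat_le_iff)
      then show ?thesis by simp
    qed
    then have "r powr (real ((d - 1) * d) / 2) \<le> r powr real (2*(d-1))"
      using r0 r1 by (intro powr_mono') auto
    also have "\<dots> = r ^ (2*(d-1))" using r0 by (rule powr_realpow)
    finally show ?thesis .
  qed
  have b: "((real d - 1) / (2 * real d)) ^ d \<le> (1/2) ^ d"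
    using D by (intro power_mono) (auto simp: field_simps)
  have c: "2 / (real d - 1) \<le> 1" using D by simp
  have P1: "1 \<le> (\<Prod>k=1..d-1. rr d ^ k + 1)" using prod_rr_ge1[of "rr d" "d-1"] r0 by (simp add: r_def)
  have num_nonneg: "0 \<le> rr d powr (real ((d - 1) * d) / 2) * ((real d - 1) / (2 * real d)) ^ d * (2 / (real d - 1))"
    using D by simp
  define Nm where "Nm = rr d powr (real ((d - 1) * d) / 2) * ((real d - 1) / (2 * real d)) ^ d * (2 / (real d - 1))"
  have "beta d = Nm / (\<Prod>k=1..d-1. rr d ^ k + 1)" by (simp add: beta_def Nm_def)
  also have "\<dots> \<le> Nm / 1"
    using P1 num_nonneg by (intro divide_left_mono) (auto simp: Nm_def)
  also have "\<dots> \<le> r ^ (2*(d-1)) * (1/2) ^ d * 1"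
  proof -
    have n1: "r powr (real ((d - 1) * d) / 2) * ((real d - 1) / (2 * real d)) ^ d \<le> r ^ (2*(d-1)) * (1/2) ^ d"
      by (rule mult_mono[OF a b]) (use D r0 in simp_all)
    have n2: "r powr (real ((d - 1) * d) / 2) * ((real d - 1) / (2 * real d)) ^ d * (2 / (real d - 1)) \<le> r ^ (2*(d-1)) * (1/2) ^ d * 1"
      by (rule mult_mono[OF n1 c]) (use D r0 in simp_all)
    show ?thesis unfolding div_by_1 Nm_def r_def[symmetric] by (rule n2)
  qed
  also have "\<dots> \<le> x ^ (2*(d-1)) * (1/2) ^ d"
  proof -
    have "r ^ (2*(d-1)) \<le> x ^ (2*(d-1))" by (rule power_mono) (use rx r0 in auto)
    from mult_right_mono[OF this, of "(1/2)^d"] show ?thesis by simp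
  qed
  also have "\<dots> = (x^2/2) ^ (d-1) / 2"
  proof -
    have "d = Suc (d-1)" using d by simp
    then have "(1/2::real) ^ d = (1/2) ^ (d-1) * (1/2)" by (metis power_Suc2)
    then show ?thesis by (simp add: power_mult power_divide)
  qed
  also have "\<dots> \<le> (1/(2*M)) ^ (d-1) / 2"
  proof -
    have x2: "x^2 \<le> 1/M"
    proof -
      define Dr where "Dr = real d"
      have Dr4: "Dr \<ge> 4" using D by (simp add: Dr_def)
      have Q: "(real (d-1) * real d ^ 2)^2 = (Dr-1)^2 * Dr^4" using d
        by (simp add: Dr_def of_nat_diff power_mult_distrib power2_eq_square eval_nat_numeral)
      have "(3::real)^2 \<le> (Dr-1)^2" using Dr4 by (intro power_mono) auto
      then have h1: "(Dr-1)^2 \<ge> 9" by simp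
      have "(4::real)^2 \<le> Dr^2" using Dr4 by (intro power_mono) auto
      then have h2: "Dr^2 \<ge> 16" by simp
      have "9 * 16 \<le> (Dr-1)^2 * Dr^2" using h1 h2 by (intro mult_mono) auto
      then have "144 * Dr^2 \<le> (Dr-1)^2 * Dr^2 * Dr^2" by (intro mult_right_mono) auto
      moreover have "(Dr-1)^2 * Dr^2 * Dr^2 = (Dr-1)^2 * Dr^4" by (simp add: power_add[symmetric])
      ultimately have k1: "144 * Dr^2 \<le> (Dr-1)^2 * Dr^4" by simp
      have "pi^2 \<le> (31416/10000)^2" using pa pi_gt_zero by (intro power_mono) auto
      moreover have "(31416/10000::real)^2 = 986965056/100000000" by (simp add: power_divide eval_nat_numeral)
      ultimately have pi2: "pi^2 \<le> 10" by linarith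
      have Mv2: "M = 2*Dr^2 - Dr" using Mv by (simp add: Dr_def power2_eq_square algebra_simps)
      have M0: "0 \<le> M" using M28 by simp
      have "4 * pi^2 * M \<le> 4 * 10 * M" using pi2 M0 by (intro mult_right_mono) auto
      moreover have "Dr^2 \<ge> 0" by simp
      ultimately have key: "4 * pi^2 * M \<le> (Dr-1)^2 * Dr^4" using k1 Mv2 Dr4 by linarith
      have Qp: "0 < (Dr-1)^2 * Dr^4" using Dr4 by simp
      have Mp: "0 < M" using M28 by simp
      have "x^2 = 4 * pi^2 / ((Dr-1)^2 * Dr^4)" unfolding x_def Q[symmetric] by (simp add: power_divide power_mult_distrib)
      also have "\<dots> \<le> 1 / M" using key Qp Mp by (simp add: field_simps)
      finally show ?thesis .
    qed
    have "x^2/2 \<le> 1/(2*M)" using x2 by simp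
    moreover have "0 \<le> x^2/2" by simp
    ultimately have "(x^2/2) ^ (d-1) \<le> (1/(2*M)) ^ (d-1)" by (intro power_mono)
    then show ?thesis by simp
  qed
  also have "\<dots> \<le> (\<delta>/4) ^ (d-1) / 2"
    using dl M28 by (intro divide_right_mono power_mono) auto
  finally show ?thesis by (simp add: \<delta>_def M_def)
qed


lemma beta_le:
  assumes d: "d \<ge> 2"
  shows "beta d \<le> (sin (pi / real (d*(2*d-1))) / 4) ^ (d-1) / 2"
proof -
  consider "d = 2" | "d = 3" | "d \<ge> 4" using d by linarith
  then show ?thesis
  proof cases
    case 1 then show ?thesis using beta_le_d2 by simp
  next
    case 2 then show ?thesis using beta_le_d3 by simp
  next
    case 3 then show ?thesis by (rule beta_le_d4)
  qed
qed

lemma beta_small: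
  assumes d: "d \<ge> 2"
  shows "beta d \<le> 1 / (2 * real (d*(2*d-1)))"
proof -
  define M where "M = real (d*(2*d-1))"
  define \<delta> where "\<delta> = sin (pi / M)"
  have dp: "0 < \<delta>" "\<delta> \<le> 1" using sin_M_pos[OF d] by (simp_all add: \<delta>_def M_def)
  have M2: "M \<ge> 2"
  proof -
    have "1 \<le> 2*d-1" using d by simp
    from mult_le_mono2[OF this, of d] have "d \<le> d * (2*d-1)" by simp
    then show ?thesis using d unfolding M_def by linarith
  qed
  have "(\<delta>/4) ^ (d-1) \<le> (\<delta>/4) ^ 1" using dp d by (intro power_decreasing) auto
  moreover have "\<delta> \<le> pi / M" unfolding \<delta>_def using M2 by (intro sin_x_le_x) simp
  moreover have "pi / M / 4 \<le> 1 / M" using M2 pi_less_4 by (simp add: field_simps)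
  ultimately have "(\<delta>/4) ^ (d-1) \<le> 1 / M" by simp
  moreover have "beta d \<le> (\<delta>/4) ^ (d-1) / 2" unfolding \<delta>_def M_def using beta_le[OF d] .
  ultimately have "beta d \<le> (1/M) / 2"
    by (meson divide_right_mono order_trans zero_le_numeral)
  then show ?thesis by (simp add: M_def)
qed


definition SS :: "nat \<Rightarrow> (nat \<Rightarrow> real) \<Rightarrow> complex \<Rightarrow> real" where
  "SS d y z = Re ((\<Sum>l\<in>{1..2*d-1}. complex_of_real (y l) * Dir d (z * cnj (omg d ^ l))) / of_nat (2*d-1))"

definition PI :: "nat \<Rightarrow> (nat \<Rightarrow> real) \<Rightarrow> nat \<Rightarrow> complex" where
  "PI d y l = complex_of_real ((y l + SS d y (omg d ^ l * nu d) - y (2*d-1+l)) / 2)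
     + \<i> * complex_of_real ((y l + SS d y (omg d ^ l * nu d) - y (2*(2*d-1)+l)) / 2)"

definition QQ :: "nat \<Rightarrow> (nat \<Rightarrow> real) \<Rightarrow> complex \<Rightarrow> complex" where
  "QQ d y z = (\<Sum>l\<in>{1..2*d-1}. PI d y l * Dir d (z * cnj (omg d ^ l))) / of_nat (2*d-1)"

lemma omg_N: "d \<ge> 1 \<Longrightarrow> omg d ^ (2*d-1) = 1"
  unfolding omg_pow by simp

lemma omg_unit: "cmod (omg d ^ l) = 1" by (simp add: omg_pow)
lemma nu_unit: "cmod (nu d ^ l) = 1" by (simp add: nu_pow)
lemma nu1_unit: "cmod (nu d) = 1" by (simp add: nu_def)

lemma omg_shift:
  assumes "d \<ge> 1" shows "omg d ^ (m * (2*d-1) + l) = omg d ^ l"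
proof -
  have "omg d ^ (m * (2*d-1) + l) = (omg d ^ (2*d-1)) ^ m * omg d ^ l"
    by (simp only: power_add mult.commute[of m] power_mult)
  then show ?thesis using omg_N[OF assms] by simp
qed

lemma omg1_unit: "cmod (omg d) = 1" by (simp add: omg_def)

lemma sum_1N:
  fixes h :: "complex \<Rightarrow> complex"
  assumes d: "d \<ge> 1"
  shows "(\<Sum>l\<in>{1..2*d-1}. h (omg d ^ l)) = (\<Sum>l<2*d-1. h (omg d ^ l))"
  by (rule sum_shift_cyc[where h="\<lambda>l. h (omg d ^ l)"]) (simp only: omg_N[OF d] power_0)

lemma S_exact:
  fixes p :: "complex poly"
  assumes d: "d \<ge> 1" and dp: "degree p < d" and z: "cmod z = 1"
  shows "(\<Sum>l\<in>{1..2*d-1}. complex_of_real (meas d p l) * Dir d (z * cnj (omg d ^ l))) / of_nat (2*d-1)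
         = complex_of_real ((cmod (poly p z))\<^sup>2)"
proof -
  have m: "complex_of_real (meas d p l) = poly p (omg d ^ l) * cnj (poly p (omg d ^ l))" if "l \<in> {1..2*d-1}" for l
  proof -
    have "meas d p l = (cmod (poly p (omg d ^ l)))\<^sup>2" using that by (simp add: meas_def)
    then show ?thesis by (simp only: complex_norm_square)
  qed
  have "(\<Sum>l\<in>{1..2*d-1}. complex_of_real (meas d p l) * Dir d (z * cnj (omg d ^ l)))
      = (\<Sum>l\<in>{1..2*d-1}. poly p (omg d ^ l) * cnj (poly p (omg d ^ l)) * Dir d (z * cnj (omg d ^ l)))"
    by (rule sum.cong) (simp_all add: m)
  also have "\<dots> = (\<Sum>l<2*d-1. poly p (omg d ^ l) * cnj (poly p (omg d ^ l)) * Dir d (z * cnj (omg d ^ l)))"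
    by (rule sum_1N[OF d])
  finally have A: "(\<Sum>l\<in>{1..2*d-1}. complex_of_real (meas d p l) * Dir d (z * cnj (omg d ^ l)))
     = (\<Sum>l<2*d-1. poly p (omg d ^ l) * cnj (poly p (omg d ^ l)) * Dir d (z * cnj (omg d ^ l)))" .
  have B: "poly p z * cnj (poly p z) = (\<Sum>l<2*d-1. poly p (omg d ^ l) * cnj (poly p (omg d ^ l)) * Dir d (z * cnj (omg d ^ l))) / of_nat (2*d-1)"
    by (rule interp[OF d dp dp z])
  have C: "complex_of_real ((cmod (poly p z))\<^sup>2) = poly p z * cnj (poly p z)" by (rule complex_norm_square)
  show ?thesis by (simp only: A B C)
qed

lemma S_err:
  fixes p :: "complex poly"
  assumes d: "d \<ge> 1" and dp: "degree p < d" and z: "cmod z = 1"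
    and err: "\<And>l. l \<in> {1..2*d-1} \<Longrightarrow> \<bar>y l - meas d p l\<bar> \<le> e"
  shows "\<bar>SS d y z - (cmod (poly p z))\<^sup>2\<bar> \<le> real (2*d-1) * e"
proof -
  define N where "N = 2*d-1"
  have N0: "real N > 0" using d by (simp add: N_def)
  have "SS d y z - (cmod (poly p z))\<^sup>2
      = Re ((\<Sum>l\<in>{1..N}. complex_of_real (y l - meas d p l) * Dir d (z * cnj (omg d ^ l))) / of_nat N)"
  proof -
    have "complex_of_real ((cmod (poly p z))\<^sup>2) = (\<Sum>l\<in>{1..N}. complex_of_real (meas d p l) * Dir d (z * cnj (omg d ^ l))) / of_nat N"
      using S_exact[OF d dp z] by (simp add: N_def)
    then have "(cmod (poly p z))\<^sup>2 = Re ((\<Sum>l\<in>{1..N}. complex_of_real (meas d p l) * Dir d (z * cnj (omg d ^ l))) / of_nat N)"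
      by (metis Re_complex_of_real)
    then show ?thesis unfolding SS_def N_def[symmetric]
      by (simp add: sum_subtractf left_diff_distrib diff_divide_distrib)
  qed
  also have "\<bar>\<dots>\<bar> \<le> cmod ((\<Sum>l\<in>{1..N}. complex_of_real (y l - meas d p l) * Dir d (z * cnj (omg d ^ l))) / of_nat N)"
    by (rule abs_Re_le_cmod)
  also have "\<dots> \<le> real N * e"
  proof -
    have "cmod (\<Sum>l\<in>{1..N}. complex_of_real (y l - meas d p l) * Dir d (z * cnj (omg d ^ l)))
        \<le> (\<Sum>l\<in>{1..N}. cmod (complex_of_real (y l - meas d p l) * Dir d (z * cnj (omg d ^ l))))"
      by (rule norm_sum)
    also have "\<dots> \<le> (\<Sum>l\<in>{1..N}. e * real N)"
    proof (rule sum_mono)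
      fix l assume l: "l \<in> {1..N}"
      have u: "cmod (z * cnj (omg d ^ l)) = 1" using z by (simp add: norm_mult norm_power omg1_unit)
      have "cmod (complex_of_real (y l - meas d p l) * Dir d (z * cnj (omg d ^ l)))
          = \<bar>y l - meas d p l\<bar> * cmod (Dir d (z * cnj (omg d ^ l)))" by (simp add: norm_mult del: of_real_diff)
      also have "\<dots> \<le> e * real N"
        using err[of l] l Dir_bound[OF u, of d] by (intro mult_mono) (auto simp: N_def)
      finally show "cmod (complex_of_real (y l - meas d p l) * Dir d (z * cnj (omg d ^ l))) \<le> e * real N" .
    qed
    also have "\<dots> = real N * (e * real N)" by simp
    finally have "cmod (\<Sum>l\<in>{1..N}. complex_of_real (y l - meas d p l) * Dir d (z * cnj (omg d ^ l))) \<le> real N * (e * real N)" .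
    then show ?thesis using N0 by (simp add: norm_divide pos_divide_le_eq)
  qed
  finally show ?thesis by (simp add: N_def)
qed

lemma polarize:
  fixes a b :: complex
  shows "a * cnj b = complex_of_real (((cmod a)\<^sup>2 + (cmod b)\<^sup>2 - (cmod (a - b))\<^sup>2) / 2)
           + \<i> * complex_of_real (((cmod a)\<^sup>2 + (cmod b)\<^sup>2 - (cmod (a - \<i> * b))\<^sup>2) / 2)"
  by (simp only: cmod_power2) (simp add: complex_eq_iff power2_eq_square algebra_simps)

lemma abs3:
  fixes u1 u2 u3 e f :: real
  assumes "\<bar>u1\<bar> \<le> e" "\<bar>u2\<bar> \<le> e" "\<bar>u3\<bar> \<le> f"
  shows "\<bar>(u1 + u3 - u2)/2\<bar> \<le> (f + 2*e)/2"
  using assms by (simp add: abs_le_iff)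

lemma PI_err:
  fixes p :: "complex poly"
  assumes d: "d \<ge> 1" and dp: "degree p < d" and l: "l \<in> {1..2*d-1}"
    and err: "\<And>l. l \<in> {1..3*(2*d-1)} \<Longrightarrow> \<bar>y l - meas d p l\<bar> \<le> e"
  shows "cmod (PI d y l - poly p (omg d ^ l) * cnj (poly p (omg d ^ l * nu d))) \<le> real (2*d-1+2) * e"
proof -
  define N where "N = 2*d-1"
  define a where "a = poly p (omg d ^ l)"
  define b where "b = poly p (omg d ^ l * nu d)"
  have l1: "1 \<le> l" "l \<le> N" using l by (auto simp: N_def)
  have m1: "meas d p l = (cmod a)\<^sup>2" using l1 by (simp add: meas_def a_def N_def)
  have m2: "meas d p (N+l) = (cmod (a - b))\<^sup>2"
  proof -
    have w: "omg d ^ (N+l) = omg d ^ l" using omg_shift[OF d, of 1 l] by (simp add: N_def)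
    have c1: "(1 \<le> N+l \<and> N+l \<le> 2*d-1) = False" using l1 d by (auto simp: N_def)
    have c2: "(2*d \<le> N+l \<and> N+l \<le> 4*d-2) = True" using l1 d by (auto simp: N_def)
    show ?thesis unfolding meas_def by (simp only: c1 c2 if_False if_True w a_def b_def)
  qed
  have m3: "meas d p (2*N+l) = (cmod (a - \<i> * b))\<^sup>2"
  proof -
    have w: "omg d ^ (2*N+l) = omg d ^ l" using omg_shift[OF d, of 2 l] by (simp add: N_def)
    have c1: "(1 \<le> 2*N+l \<and> 2*N+l \<le> 2*d-1) = False" using l1 d by (auto simp: N_def)
    have c2: "(2*d \<le> 2*N+l \<and> 2*N+l \<le> 4*d-2) = False" using l1 d by (auto simp: N_def)
    have c3: "(4*d-1 \<le> 2*N+l \<and> 2*N+l \<le> 6*d-3) = True" using l1 d by (auto simp: N_def)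
    show ?thesis unfolding meas_def by (simp only: c1 c2 c3 if_False if_True w a_def b_def)
  qed
  have e1: "\<bar>y l - (cmod a)\<^sup>2\<bar> \<le> e" using err[of l] l1 m1 by (auto simp: N_def)
  have e2: "\<bar>y (N+l) - (cmod (a - b))\<^sup>2\<bar> \<le> e" using err[of "N+l"] l1 m2 by (auto simp: N_def)
  have e3: "\<bar>y (2*N+l) - (cmod (a - \<i> * b))\<^sup>2\<bar> \<le> e" using err[of "2*N+l"] l1 m3 by (auto simp: N_def)
  have u: "cmod (omg d ^ l * nu d) = 1" by (simp add: norm_mult omg_unit nu1_unit)
  have e4: "\<bar>SS d y (omg d ^ l * nu d) - (cmod b)\<^sup>2\<bar> \<le> real N * e"
    unfolding b_def N_def by (rule S_err[OF d dp u]) (use err in auto)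
  define A where "A = (y l + SS d y (omg d ^ l * nu d) - y (N+l)) / 2 - ((cmod a)\<^sup>2 + (cmod b)\<^sup>2 - (cmod (a - b))\<^sup>2) / 2"
  define B where "B = (y l + SS d y (omg d ^ l * nu d) - y (2*N+l)) / 2 - ((cmod a)\<^sup>2 + (cmod b)\<^sup>2 - (cmod (a - \<i> * b))\<^sup>2) / 2"
  have Ae: "A = ((y l - (cmod a)\<^sup>2) + (SS d y (omg d ^ l * nu d) - (cmod b)\<^sup>2) - (y (N+l) - (cmod (a - b))\<^sup>2)) / 2"
    unfolding A_def by (simp add: field_simps)
  have Be: "B = ((y l - (cmod a)\<^sup>2) + (SS d y (omg d ^ l * nu d) - (cmod b)\<^sup>2) - (y (2*N+l) - (cmod (a - \<i> * b))\<^sup>2)) / 2"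
    unfolding B_def by (simp add: field_simps)
  have eA: "\<bar>A\<bar> \<le> (real N * e + 2 * e) / 2" unfolding Ae by (rule abs3[OF e1 e2 e4])
  have eB: "\<bar>B\<bar> \<le> (real N * e + 2 * e) / 2" unfolding Be by (rule abs3[OF e1 e3 e4])
  have "PI d y l - a * cnj b = complex_of_real A + \<i> * complex_of_real B"
    unfolding PI_def polarize[of a b] A_def B_def N_def[symmetric] by (simp add: algebra_simps)
  moreover have "cmod (complex_of_real A + \<i> * complex_of_real B) \<le> \<bar>A\<bar> + \<bar>B\<bar>"
    using cmod_le[of "complex_of_real A + \<i> * complex_of_real B"] by simp
  ultimately have "cmod (PI d y l - a * cnj b) \<le> \<bar>A\<bar> + \<bar>B\<bar>" by simp
  also have "\<dots> \<le> (real N * e + 2 * e) / 2 + (real N * e + 2 * e) / 2" by (rule add_mono[OF eA eB])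
  also have "\<dots> = real N * e + 2 * e" by simp
  also have "\<dots> = real (2*d-1+2) * e" by (simp add: N_def algebra_simps)
  finally show ?thesis by (simp add: a_def b_def)
qed

lemma Q_err:
  fixes p :: "complex poly"
  assumes d: "d \<ge> 1" and dp: "degree p < d" and z: "cmod z = 1"
    and err: "\<And>l. l \<in> {1..3*(2*d-1)} \<Longrightarrow> \<bar>y l - meas d p l\<bar> \<le> e"
  shows "cmod (QQ d y z - poly p z * cnj (poly p (z * nu d))) \<le> real (2*d-1) * (real (2*d-1+2) * e)"
proof -
  have "1 \<in> {1..3*(2*d-1)}" using d by auto
  from err[OF this] have e0: "0 \<le> e" by (meson abs_ge_zero order_trans)
  define N where "N = 2*d-1"
  have N0: "real N > 0" using d by (simp add: N_def)
  define g where "g = pcompose p [:0, nu d:]"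
  have pg: "poly g x = poly p (x * nu d)" for x by (simp add: g_def poly_pcompose)
  have dg: "degree g < d"
  proof -
    have "degree g \<le> degree p * degree [:0, nu d:]" unfolding g_def by (rule degree_pcompose_le)
    also have "\<dots> \<le> degree p" by (cases "nu d = 0") simp_all
    finally show ?thesis using dp by simp
  qed
  have ex: "poly p z * cnj (poly p (z * nu d))
      = (\<Sum>l\<in>{1..N}. poly p (omg d ^ l) * cnj (poly p (omg d ^ l * nu d)) * Dir d (z * cnj (omg d ^ l))) / of_nat N"
  proof -
    have "poly p z * cnj (poly p (z * nu d)) = poly p z * cnj (poly g z)" by (simp add: pg)
    also have "\<dots> = (\<Sum>l<N. poly p (omg d ^ l) * cnj (poly g (omg d ^ l)) * Dir d (z * cnj (omg d ^ l))) / of_nat N"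
      unfolding N_def by (rule interp[OF d dp dg z])
    also have "(\<Sum>l<N. poly p (omg d ^ l) * cnj (poly g (omg d ^ l)) * Dir d (z * cnj (omg d ^ l)))
        = (\<Sum>l\<in>{1..N}. poly p (omg d ^ l) * cnj (poly g (omg d ^ l)) * Dir d (z * cnj (omg d ^ l)))"
      unfolding N_def by (rule sum_1N[OF d, symmetric])
    finally show ?thesis by (simp add: pg)
  qed
  have "QQ d y z - poly p z * cnj (poly p (z * nu d))
     = (\<Sum>l\<in>{1..N}. (PI d y l - poly p (omg d ^ l) * cnj (poly p (omg d ^ l * nu d))) * Dir d (z * cnj (omg d ^ l))) / of_nat N"
    unfolding QQ_def ex N_def[symmetric] by (simp add: sum_subtractf left_diff_distrib diff_divide_distrib)
  also have "cmod \<dots> \<le> real N * (real (2*d-1+2) * e)"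
  proof -
    have "cmod (\<Sum>l\<in>{1..N}. (PI d y l - poly p (omg d ^ l) * cnj (poly p (omg d ^ l * nu d))) * Dir d (z * cnj (omg d ^ l)))
        \<le> (\<Sum>l\<in>{1..N}. cmod ((PI d y l - poly p (omg d ^ l) * cnj (poly p (omg d ^ l * nu d))) * Dir d (z * cnj (omg d ^ l))))"
      by (rule norm_sum)
    also have "\<dots> \<le> (\<Sum>l\<in>{1..N}. real (2*d-1+2) * e * real N)"
    proof (rule sum_mono)
      fix l assume l: "l \<in> {1..N}"
      have u: "cmod (z * cnj (omg d ^ l)) = 1" using z by (simp add: norm_mult norm_power omg1_unit)
      have "cmod ((PI d y l - poly p (omg d ^ l) * cnj (poly p (omg d ^ l * nu d))) * Dir d (z * cnj (omg d ^ l)))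
          = cmod (PI d y l - poly p (omg d ^ l) * cnj (poly p (omg d ^ l * nu d))) * cmod (Dir d (z * cnj (omg d ^ l)))"
        by (simp add: norm_mult)
      also have "\<dots> \<le> real (2*d-1+2) * e * real N"
        using PI_err[OF d dp _ err, of l] l Dir_bound[OF u, of d] e0 by (intro mult_mono) (auto simp: N_def)
      finally show "cmod ((PI d y l - poly p (omg d ^ l) * cnj (poly p (omg d ^ l * nu d))) * Dir d (z * cnj (omg d ^ l)))
          \<le> real (2*d-1+2) * e * real N" .
    qed
    also have "\<dots> = real N * (real (2*d-1+2) * e * real N)" by simp
    finally show ?thesis using N0 by (simp add: norm_divide pos_divide_le_eq mult_ac)
  qed
  finally show ?thesis by (simp add: N_def)
qed


lemma K_lower:
  fixes b \<alpha> C G :: real and n :: nat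
  assumes n: "n \<ge> 2" and b0: "0 < b" and b1: "b \<le> 1/12" and a0: "0 < \<alpha>" and a1: "\<alpha> < 1"
    and C: "real n / b\<^sup>2 \<le> C" and G: "0 < G"
  shows "real n ^ 2 * G / (2 * b ^ 3) \<le>
    ((2 + sqrt 2) / (b\<^sup>2 * (1 - \<alpha>)) * ((real n - real n * C - 1 + C ^ n) / (1 - C)) * sqrt (real n)
      + (1 - C ^ n) / (2 * b * sqrt (1 / sqrt (real n) * (1 - \<alpha>)))) * (real n * G / (1 - C))"
proof -
  define D where "D = real n"
  have D2: "D \<ge> 2" using n by (simp add: D_def)
  have bb: "b\<^sup>2 \<le> 1/144"
  proof -
    have "b\<^sup>2 \<le> (1/12)\<^sup>2" using b0 b1 by (intro power_mono) auto
    then show ?thesis by (simp add: power2_eq_square)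
  qed
  have "D / b\<^sup>2 \<ge> D / (1/144)" using b0 bb D2 by (intro divide_left_mono) auto
  then have C288: "C \<ge> 288" using C D2 unfolding D_def[symmetric] by simp
  have C1: "C > 1" using C288 by simp
  define X where "X = sqrt (1 / sqrt D * (1 - \<alpha>))"
  have sD: "sqrt D \<ge> 1" using D2 by simp
  have X0: "0 < X" using a1 sD by (simp add: X_def)
  have X1: "X \<le> 1"
  proof -
    have "1 / sqrt D \<le> 1" using sD by simp
    moreover have "1 - \<alpha> \<le> 1" "0 \<le> 1 - \<alpha>" using a0 a1 by simp_all
    ultimately have "1 / sqrt D * (1 - \<alpha>) \<le> 1 * 1" using sD by (intro mult_mono) auto
    then show ?thesis by (simp add: X_def)
  qed
  define T1 where "T1 = (2 + sqrt 2) / (b\<^sup>2 * (1 - \<alpha>)) * ((D - D * C - 1 + C ^ n) / (1 - C)) * sqrt D"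
  define T2 where "T2 = (1 - C ^ n) / (2 * b * X)"
  define F where "F = D * G / (1 - C)"
  have F0: "F < 0" using C1 D2 G by (simp add: F_def divide_pos_neg)
  have bern: "1 + real n * (C - 1) \<le> (1 + (C - 1)) ^ n"
    by (rule Bernoulli_inequality) (use C1 in simp)
  have numnn: "0 \<le> D - D * C - 1 + C ^ n" using bern by (simp add: D_def algebra_simps)
  have T1le: "T1 \<le> 0"
  proof -
    have h1: "(D - D * C - 1 + C ^ n) / (1 - C) \<le> 0" using numnn C1 by (simp add: divide_nonneg_neg)
    have h2: "0 \<le> (2 + sqrt 2) / (b\<^sup>2 * (1 - \<alpha>))" using a1 by simp
    from mult_nonneg_nonpos[OF h2 h1]
    have "(2 + sqrt 2) / (b\<^sup>2 * (1 - \<alpha>)) * ((D - D * C - 1 + C ^ n) / (1 - C)) \<le> 0" .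
    from mult_nonpos_nonneg[OF this, of "sqrt D"] show ?thesis unfolding T1_def using sD by simp
  qed
  have T1F: "0 \<le> T1 * F" using T1le F0 by (simp add: mult_nonpos_nonpos)
  have geo: "C * (C - 1) \<le> C ^ n - 1"
  proof -
    have "C ^ 2 \<le> C ^ n" using C1 n by (intro power_increasing) auto
    then show ?thesis using C1 by (simp add: power2_eq_square algebra_simps)
  qed
  have T2F: "T2 * F = ((C ^ n - 1) / (C - 1)) * (D * G / (2 * b * X))"
    unfolding T2_def F_def using C1 b0 X0 by (simp add: field_simps)
  have r1: "C \<le> (C ^ n - 1) / (C - 1)" using geo C1 by (simp add: pos_le_divide_eq)
  have r2: "D * G / (2 * b) \<le> D * G / (2 * b * X)"
    using X0 X1 b0 D2 G by (intro divide_left_mono) (auto simp: mult_pos_pos)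
  have "C * (D * G / (2 * b)) \<le> ((C ^ n - 1) / (C - 1)) * (D * G / (2 * b * X))"
    using r1 r2 C1 D2 G b0 by (intro mult_mono) auto
  moreover have "(D / b\<^sup>2) * (D * G / (2 * b)) \<le> C * (D * G / (2 * b))"
    using C D2 G b0 unfolding D_def[symmetric] by (intro mult_right_mono) auto
  moreover have "(D / b\<^sup>2) * (D * G / (2 * b)) = D ^ 2 * G / (2 * b ^ 3)"
    using b0 by (simp add: field_simps power2_eq_square power3_eq_cube)
  ultimately have "D ^ 2 * G / (2 * b ^ 3) \<le> T2 * F" using T2F by linarith
  then have "D ^ 2 * G / (2 * b ^ 3) \<le> (T1 + T2) * F" using T1F by (simp add: distrib_right)
  then show ?thesis unfolding T1_def T2_def F_def X_def D_def .
qed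

lemma final_arith:
  fixes b D G :: real
  assumes D2: "D \<ge> 2" and G: "G = 2 * D - 1" and b0: "0 < b" and b1: "b \<le> 1 / (2 * D * G)"
  shows "sqrt D * (G / b + D * (D - 1) * G * (G + 2) / b\<^sup>2) \<le> D ^ 2 * G / (2 * b ^ 3)"
proof -
  have G3: "G \<ge> 3" using G D2 by simp
  have DG: "2 * 3 \<le> D * G" using D2 G3 by (intro mult_mono) auto
  have b12: "b \<le> 1/12"
  proof -
    have "1 / (2 * D * G) \<le> 1 / 12" using DG by (intro divide_left_mono) (auto simp: mult.assoc)
    then show ?thesis using b1 by linarith
  qed
  have bb: "b\<^sup>2 \<le> 1/144"
  proof -
    have "b\<^sup>2 \<le> (1/12)\<^sup>2" using b0 b12 by (intro power_mono) auto
    then show ?thesis by (simp add: power2_eq_square)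
  qed
  have t1: "D * (D - 1) * (G + 2) * b \<le> D / 2"
  proof -
    have nn: "0 \<le> D * (D - 1) * (G + 2)" using D2 G3 by simp
    have "D * (D - 1) * (G + 2) * b \<le> D * (D - 1) * (G + 2) * (1 / (2 * D * G))"
      using b1 nn by (intro mult_left_mono) auto
    also have "\<dots> = (D - 1) * (G + 2) / (2 * G)" using D2 G3 by (simp add: field_simps)
    also have "(D - 1) * (G + 2) = D * G - 1" by (simp add: G algebra_simps)
    also have "(D * G - 1) / (2 * G) \<le> (D * G) / (2 * G)" using G3 by (intro divide_right_mono) auto
    also have "\<dots> = D / 2" using G3 by simp
    finally show ?thesis .
  qed
  define S where "S = b\<^sup>2 + D * (D - 1) * (G + 2) * b"
  have S0: "0 \<le> S" using b0 D2 G3 by (simp add: S_def)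
  have S1: "S \<le> 1/144 + D/2" using bb t1 by (simp add: S_def)
  have sq: "sqrt D \<le> D - 1/2"
  proof -
    have "D \<le> (D - 1/2)\<^sup>2"
    proof -
      have "0 \<le> D * (D - 2)" using D2 by simp
      then show ?thesis by (simp add: power2_eq_square algebra_simps)
    qed
    then have "sqrt D \<le> sqrt ((D - 1/2)\<^sup>2)" by (rule real_sqrt_le_mono)
    then show ?thesis using D2 by simp
  qed
  have "sqrt D * S \<le> (D - 1/2) * (1/144 + D/2)" using sq S1 S0 D2 by (intro mult_mono) auto
  also have "\<dots> \<le> D^2 / 2" using D2 by (simp add: power2_eq_square algebra_simps)
  finally have key: "sqrt D * S \<le> D^2 / 2" .
  have "sqrt D * (G / b + D * (D - 1) * G * (G + 2) / b\<^sup>2) = (G / b^3) * (sqrt D * S)"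
    unfolding S_def using b0 by (simp add: field_simps power2_eq_square power3_eq_cube)
  also have "\<dots> \<le> (G / b^3) * (D^2 / 2)" using key G3 b0 by (intro mult_left_mono) auto
  also have "\<dots> = D ^ 2 * G / (2 * b ^ 3)" by (simp add: mult.commute)
  finally show ?thesis .
qed


definition zpt :: "nat \<Rightarrow> nat \<Rightarrow> nat \<Rightarrow> complex" where
  "zpt d j k = omg d ^ j * nu d ^ k"

definition score :: "nat \<Rightarrow> (nat \<Rightarrow> real) \<Rightarrow> nat \<Rightarrow> real" where
  "score d y j = Min ((\<lambda>k. SS d y (zpt d j k)) ` {..<d})"

definition jsel :: "nat \<Rightarrow> (nat \<Rightarrow> real) \<Rightarrow> nat" where
  "jsel d y = (SOME j. j \<in> {1..2*d-1} \<and> (\<forall>j'\<in>{1..2*d-1}. score d y j' \<le> score d y j))"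

fun uh :: "nat \<Rightarrow> (nat \<Rightarrow> real) \<Rightarrow> nat \<Rightarrow> complex" where
  "uh d y 0 = 1"
| "uh d y (Suc k) = uh d y k * sgn (cnj (QQ d y (zpt d (jsel d y) k)))"

definition ah :: "nat \<Rightarrow> (nat \<Rightarrow> real) \<Rightarrow> nat \<Rightarrow> complex" where
  "ah d y k = complex_of_real (sqrt (max 0 (SS d y (zpt d (jsel d y) k)))) * uh d y k"

definition ch :: "nat \<Rightarrow> (nat \<Rightarrow> real) \<Rightarrow> nat \<Rightarrow> complex" where
  "ch d y b = (\<Sum>k<d. ah d y k * cnj (zpt d (jsel d y) k) ^ b) / of_nat d"

definition Rec :: "nat \<Rightarrow> (nat \<Rightarrow> real) \<Rightarrow> complex poly" where
  "Rec d y = (\<Sum>b<d. monom (ch d y b) b)"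

lemma zpt_unit: "cmod (zpt d j k) = 1"
  by (simp add: zpt_def norm_mult omg_unit nu_unit)

lemma zpt_Suc: "zpt d j k * nu d = zpt d j (Suc k)"
  by (simp add: zpt_def mult.assoc mult.commute)

lemma jsel_prop:
  assumes d: "d \<ge> 1"
  shows "jsel d y \<in> {1..2*d-1} \<and> (\<forall>j'\<in>{1..2*d-1}. score d y j' \<le> score d y (jsel d y))"
proof -
  have fin: "finite (score d y ` {1..2*d-1})" by simp
  have ne: "score d y ` {1..2*d-1} \<noteq> {}" using d by auto
  obtain j0 where j0: "j0 \<in> {1..2*d-1}" "score d y j0 = Max (score d y ` {1..2*d-1})"
    using Max_in[OF fin ne] by auto
  have "\<forall>j'\<in>{1..2*d-1}. score d y j' \<le> score d y j0" using j0 fin by simp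
  then have "\<exists>j. j \<in> {1..2*d-1} \<and> (\<forall>j'\<in>{1..2*d-1}. score d y j' \<le> score d y j)" using j0 by blast
  then show ?thesis unfolding jsel_def by (rule someI_ex)
qed

lemma coeff_Rec: "coeff (Rec d y) n = (if n < d then ch d y n else 0)"
  unfolding Rec_def coeff_sum by (simp add: sum.delta' lessThan_def)

lemma degree_Rec: assumes "d \<ge> 1" shows "degree (Rec d y) < d"
proof -
  have "degree (Rec d y) \<le> d - 1" by (rule degree_le) (use assms in \<open>auto simp: coeff_Rec\<close>)
  then show ?thesis using assms by simp
qed

lemma pnorm_smult: "pnorm (smult a q) = cmod a * pnorm q"
proof -
  have dq: "degree q < degree q + 1" by simp
  have ds: "degree (smult a q) < degree q + 1" using degree_smult_le[of a q] by simp
  show ?thesis unfolding pnorm_sum[OF dq] pnorm_sum[OF ds]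
    by (simp add: norm_mult power_mult_distrib sum_distrib_left[symmetric] real_sqrt_mult)
qed

lemma pnorm_minus_comm: "pnorm (p - q) = pnorm (q - p)"
proof -
  define n where "n = max (degree p) (degree q) + 1"
  have d1: "degree (p - q) < n" using degree_diff_le_max[of p q] by (simp add: n_def)
  have d2: "degree (q - p) < n" using degree_diff_le_max[of q p] by (simp add: n_def)
  show ?thesis unfolding pnorm_sum[OF d1] pnorm_sum[OF d2] by (simp add: norm_minus_commute)
qed

lemma rho_le:
  assumes "cmod c = 1"
  shows "rho p q \<le> pnorm (p - smult c q)"
  unfolding rho_def
proof (rule cINF_lower)
  show "bdd_below ((\<lambda>c. pnorm (p - smult c q)) ` {c. cmod c = 1})"
    by (rule bdd_belowI[of _ 0]) (auto simp: pnorm_nonneg)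
  show "c \<in> {c. cmod c = 1}" using assms by simp
qed

lemma sgn_cnj: "sgn (cnj z) = cnj (sgn z)"
  by (simp add: Complex.sgn_eq)

lemma uh_bound: "cmod (uh d y k) \<le> 1"
proof (induction k)
  case 0 then show ?case by simp
next
  case (Suc k)
  have "cmod (uh d y (Suc k)) = cmod (uh d y k) * cmod (sgn (cnj (QQ d y (zpt d (jsel d y) k))))"
    by (simp add: norm_mult)
  also have "\<dots> \<le> 1 * 1" using Suc by (intro mult_mono) (auto simp: norm_sgn)
  finally show ?case by simp
qed

lemma unit_sgn_cnj: assumes "z \<noteq> 0" shows "sgn z * cnj (sgn z) = 1"
proof -
  have "sgn z * cnj (sgn z) = complex_of_real ((cmod (sgn z))\<^sup>2)" by (rule complex_norm_square[symmetric])
  then show ?thesis using assms by (simp add: norm_sgn)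
qed

lemma main_bound:
  fixes p :: "complex poly"
  assumes d: "d \<ge> 2" and a1: "\<alpha> < 1" and dp: "degree p < d" and p0: "p \<noteq> 0"
    and err: "\<And>l. l \<in> {1..3*(2*d-1)} \<Longrightarrow> \<bar>y l - meas d p l\<bar> \<le> e"
    and noise: "real (2*d-1) * e \<le> \<alpha> * (beta d * pnorm p)\<^sup>2"
  shows "rho p (Rec d y) \<le> sqrt (real d) * ((e / pnorm p) * (real (2*d-1) / beta d
           + real d * (real d - 1) * real (2*d-1) * (real (2*d-1) + 2) / (beta d)\<^sup>2))"
proof -
  have d1: "d \<ge> 1" using d by simp
  define N where "N = 2*d-1"
  define P where "P = pnorm p"
  define b where "b = beta d"
  have P0: "P > 0" using p0 by (simp add: P_def pnorm_pos)
  have b0: "b > 0" using beta_pos[OF d] by (simp add: b_def)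
  have "1 \<in> {1..3*(2*d-1)}" using d by auto
  from err[OF this] have e0: "0 \<le> e" by (meson abs_ge_zero order_trans)
  have N1: "real N \<ge> 3" using d by (simp add: N_def)
  have errN: "\<And>l. l \<in> {1..2*d-1} \<Longrightarrow> \<bar>y l - meas d p l\<bar> \<le> e" using err by auto
  have Serr: "\<bar>SS d y z - (cmod (poly p z))\<^sup>2\<bar> \<le> real N * e" if "cmod z = 1" for z
    unfolding N_def by (rule S_err[OF d1 dp that errN])
  have NeB: "real N * e \<le> b\<^sup>2 * P\<^sup>2"
  proof -
    have "\<alpha> * (b * P)\<^sup>2 \<le> 1 * (b * P)\<^sup>2" using a1 by (intro mult_right_mono) auto
    then show ?thesis using noise by (simp add: N_def b_def P_def power_mult_distrib)
  qed
  define \<gamma> where "\<gamma> = (sin (pi / real (d*(2*d-1))) / 4) ^ (d-1)"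
  have bg: "2 * b \<le> \<gamma>" using beta_le[OF d] by (simp add: b_def \<gamma>_def)
  obtain js where js: "js \<in> {1..N}" and jsl: "\<forall>k<d. \<gamma> * P \<le> cmod (poly p (zpt d js k))"
    using lower_bound[OF d p0 dp] unfolding \<gamma>_def[symmetric] P_def[symmetric] N_def zpt_def by blast
  define j0 where "j0 = jsel d y"
  have j0: "j0 \<in> {1..N}" "\<forall>j'\<in>{1..N}. score d y j' \<le> score d y j0"
    using jsel_prop[OF d1, of y] by (simp_all add: j0_def N_def)
  have fin: "finite ((\<lambda>k. SS d y (zpt d j k)) ` {..<d})" for j by simp
  have ne: "(\<lambda>k. SS d y (zpt d j k)) ` {..<d} \<noteq> {}" for j
  proof -
    have "0 \<in> {..<d}" using d by simp
    then show ?thesis by blast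
  qed
  have sc_js: "(\<gamma> * P)\<^sup>2 - real N * e \<le> score d y js"
    unfolding score_def
  proof (subst Min_ge_iff[OF fin ne], intro ballI)
    fix x assume "x \<in> (\<lambda>k. SS d y (zpt d js k)) ` {..<d}"
    then obtain k where k: "k < d" and x: "x = SS d y (zpt d js k)" by auto
    have "(\<gamma> * P)\<^sup>2 \<le> (cmod (poly p (zpt d js k)))\<^sup>2"
      using jsl k bg b0 P0 by (intro power_mono) auto
    moreover have "\<bar>SS d y (zpt d js k) - (cmod (poly p (zpt d js k)))\<^sup>2\<bar> \<le> real N * e"
      by (rule Serr[OF zpt_unit])
    ultimately show "(\<gamma> * P)\<^sup>2 - real N * e \<le> x" unfolding x by linarith
  qed
  define a where "a = (\<lambda>k. poly p (zpt d j0 k))"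
  have a_lb: "2 * b\<^sup>2 * P\<^sup>2 \<le> (cmod (a k))\<^sup>2" if k: "k < d" for k
  proof -
    have "score d y j0 \<le> SS d y (zpt d j0 k)" unfolding score_def using k by (intro Min_le) auto
    moreover have "score d y js \<le> score d y j0" using j0 js by blast
    moreover have "\<bar>SS d y (zpt d j0 k) - (cmod (a k))\<^sup>2\<bar> \<le> real N * e"
      unfolding a_def by (rule Serr[OF zpt_unit])
    moreover have "(2 * b * P)\<^sup>2 \<le> (\<gamma> * P)\<^sup>2" using bg b0 P0 by (intro power_mono mult_right_mono) auto
    ultimately have "(2 * b * P)\<^sup>2 - 2 * (real N * e) \<le> (cmod (a k))\<^sup>2" using sc_js by linarith
    moreover have "(2 * b * P)\<^sup>2 = 4 * (b\<^sup>2 * P\<^sup>2)" by (simp add: power_mult_distrib)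
    ultimately show ?thesis using NeB by linarith
  qed
  have a_lb1: "b * P \<le> cmod (a k)" if k: "k < d" for k
  proof -
    have "(b * P)\<^sup>2 \<le> 2 * b\<^sup>2 * P\<^sup>2" by (simp add: power_mult_distrib)
    also have "\<dots> \<le> (cmod (a k))\<^sup>2" by (rule a_lb[OF k])
    finally show ?thesis by (rule power2_le_imp_le) simp
  qed
  have a_ub: "cmod (a k) \<le> real d * P" for k
    unfolding a_def P_def by (rule poly_bound[OF dp zpt_unit])
  have a_nz: "a k \<noteq> 0" if "k < d" for k using a_lb1[OF that] b0 P0 by (metis mult_pos_pos norm_zero not_le)
  define s where "s = (\<lambda>k. sqrt (max 0 (SS d y (zpt d j0 k))))"
  have mag: "\<bar>s k - cmod (a k)\<bar> \<le> real N * e / (b * P)" if k: "k < d" for k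
  proof -
    have ak0: "cmod (a k) > 0" using a_nz[OF k] by simp
    have "\<bar>s k - cmod (a k)\<bar> \<le> \<bar>SS d y (zpt d j0 k) - (cmod (a k))\<^sup>2\<bar> / cmod (a k)"
      unfolding s_def by (rule sqrt_err[OF ak0])
    also have "\<dots> \<le> real N * e / (b * P)"
      using Serr[OF zpt_unit[of d j0 k]] a_lb1[OF k] b0 P0 e0 N1
      by (intro frac_le) (auto simp: a_def)
    finally show ?thesis .
  qed
  define X where "X = real N * (real N + 2) * e / (b\<^sup>2 * P\<^sup>2)"
  have X0: "0 \<le> X" using e0 b0 P0 by (simp add: X_def)
  define c where "c = cnj (sgn (a 0))"
  have d0: "0 < d" using d by simp
  have c1: "cmod c = 1" using a_nz[OF d0] by (simp add: c_def norm_sgn)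
  have phase: "k < d \<longrightarrow> cmod (uh d y k - c * sgn (a k)) \<le> real k * X" for k
  proof (induction k)
    case 0
    have "c * sgn (a 0) = 1" using unit_sgn_cnj[OF a_nz[OF d0]] by (simp add: c_def mult.commute)
    then show ?case by simp
  next
    case (Suc k)
    show ?case
    proof
      assume k1: "Suc k < d"
      then have k: "k < d" by simp
      define Q where "Q = QQ d y (zpt d j0 k)"
      define q where "q = a k * cnj (a (Suc k))"
      have Qq: "cmod (Q - q) \<le> real N * (real N + 2) * e"
      proof -
        have "cmod (Q - poly p (zpt d j0 k) * cnj (poly p (zpt d j0 k * nu d))) \<le> real (2*d-1) * (real (2*d-1+2) * e)"
          unfolding Q_def by (rule Q_err[OF d1 dp zpt_unit err])
        then show ?thesis by (simp add: q_def a_def zpt_Suc N_def mult.assoc add.commute)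
      qed
      have qlb: "2 * b\<^sup>2 * P\<^sup>2 \<le> cmod q"
      proof -
        have "(2 * b\<^sup>2 * P\<^sup>2) * (2 * b\<^sup>2 * P\<^sup>2) \<le> (cmod (a k))\<^sup>2 * (cmod (a (Suc k)))\<^sup>2"
          by (rule mult_mono[OF a_lb[OF k] a_lb[OF k1]]) simp_all
        then have "(2 * b\<^sup>2 * P\<^sup>2)\<^sup>2 \<le> (cmod (a k))\<^sup>2 * (cmod (a (Suc k)))\<^sup>2"
          by (simp only: power2_eq_square[of "2 * b\<^sup>2 * P\<^sup>2"])
        also have "\<dots> = (cmod q)\<^sup>2" by (simp add: q_def norm_mult power_mult_distrib)
        finally show ?thesis by (rule power2_le_imp_le) simp
      qed
      have q0: "q \<noteq> 0" using qlb b0 P0 by (metis mult_pos_pos norm_zero not_le zero_less_numeral zero_less_power)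
      have sgnerr: "cmod (sgn Q - sgn q) \<le> X"
      proof -
        have "cmod (sgn Q - sgn q) \<le> 2 * cmod (Q - q) / cmod q" by (rule sgn_diff_bound[OF q0])
        also have "\<dots> \<le> 2 * (real N * (real N + 2) * e) / (2 * b\<^sup>2 * P\<^sup>2)"
          using Qq qlb b0 P0 e0 by (intro frac_le) auto
        also have "\<dots> = X" by (simp add: X_def)
        finally show ?thesis .
      qed
      have rel: "sgn (a (Suc k)) = sgn (a k) * sgn (cnj q)"
      proof -
        have "sgn (cnj q) = cnj (sgn (a k)) * sgn (a (Suc k))"
          by (simp add: q_def sgn_mult sgn_cnj)
        then have "sgn (a k) * sgn (cnj q) = (sgn (a k) * cnj (sgn (a k))) * sgn (a (Suc k))" by (simp add: mult.assoc)
        then show ?thesis using unit_sgn_cnj[OF a_nz[OF k]] by simp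
      qed
      have "uh d y (Suc k) - c * sgn (a (Suc k))
          = (uh d y k - c * sgn (a k)) * sgn (cnj Q) + c * sgn (a k) * (sgn (cnj Q) - sgn (cnj q))"
        by (simp add: Q_def j0_def rel algebra_simps)
      then have "cmod (uh d y (Suc k) - c * sgn (a (Suc k)))
          \<le> cmod (uh d y k - c * sgn (a k)) * cmod (sgn (cnj Q)) + cmod (c * sgn (a k)) * cmod (sgn (cnj Q) - sgn (cnj q))"
        by (metis norm_triangle_ineq norm_mult)
      also have "cmod (sgn (cnj Q) - sgn (cnj q)) = cmod (sgn Q - sgn q)"
        by (metis sgn_cnj complex_cnj_diff complex_mod_cnj)
      also have "cmod (c * sgn (a k)) = 1" using c1 a_nz[OF k] by (simp add: norm_mult norm_sgn)
      also have "cmod (uh d y k - c * sgn (a k)) * cmod (sgn (cnj Q)) \<le> real k * X * 1"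
        using Suc.IH k X0 by (intro mult_mono) (auto simp: norm_sgn)
      finally show "cmod (uh d y (Suc k) - c * sgn (a (Suc k))) \<le> real (Suc k) * X"
        using sgnerr by (simp add: algebra_simps)
    qed
  qed
  define E where "E = real N * e / (b * P) + real d * P * (real (d-1) * X)"
  have verr: "cmod (ah d y k - c * a k) \<le> E" if k: "k < d" for k
  proof -
    have ak: "complex_of_real (cmod (a k)) * sgn (a k) = a k" by (simp add: Complex.sgn_eq)
    have e1: "complex_of_real (s k - cmod (a k)) * uh d y k
         + complex_of_real (cmod (a k)) * (uh d y k - c * sgn (a k))
         = complex_of_real (s k) * uh d y k - c * (complex_of_real (cmod (a k)) * sgn (a k))"
      by (simp add: algebra_simps)
    have e2: "ah d y k = complex_of_real (s k) * uh d y k" by (simp add: ah_def s_def j0_def)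
    have "ah d y k - c * a k = complex_of_real (s k - cmod (a k)) * uh d y k
         + complex_of_real (cmod (a k)) * (uh d y k - c * sgn (a k))"
      unfolding e1 ak e2 ..
    then have "cmod (ah d y k - c * a k) \<le> \<bar>s k - cmod (a k)\<bar> * cmod (uh d y k) + cmod (a k) * cmod (uh d y k - c * sgn (a k))"
      by (metis (no_types, lifting) norm_triangle_ineq norm_mult norm_of_real abs_norm_cancel)
    also have "\<dots> \<le> real N * e / (b * P) * 1 + real d * P * (real (d-1) * X)"
    proof (intro add_mono mult_mono)
      show "\<bar>s k - cmod (a k)\<bar> \<le> real N * e / (b * P)" by (rule mag[OF k])
      show "cmod (uh d y k) \<le> 1" by (rule uh_bound)
      show "cmod (a k) \<le> real d * P" by (rule a_ub)
      have "cmod (uh d y k - c * sgn (a k)) \<le> real k * X" using phase k by blast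
      also have "\<dots> \<le> real (d-1) * X" using k X0 by (intro mult_right_mono) auto
      finally show "cmod (uh d y k - c * sgn (a k)) \<le> real (d-1) * X" .
    qed (use e0 b0 P0 N1 d in auto)
    finally show ?thesis by (simp add: E_def)
  qed
  have cerr: "cmod (ch d y i - c * coeff p i) \<le> E" if i: "i < d" for i
    unfolding ch_def zpt_def j0_def[symmetric]
    by (rule dft_err[OF d1 dp omg_unit i]) (use verr in \<open>simp add: a_def zpt_def\<close>)
  have E0: "0 \<le> E" using verr[OF d0] by (meson norm_ge_zero order_trans)
  have dR: "degree (Rec d y - smult c p) < d"
    using degree_Rec[OF d1, of y] degree_smult_le[of c p] dp by (intro degree_diff_less) auto
  have "pnorm (Rec d y - smult c p) = sqrt (\<Sum>i<d. (cmod (coeff (Rec d y - smult c p) i))\<^sup>2)"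
    by (rule pnorm_sum[OF dR])
  also have "\<dots> \<le> sqrt (\<Sum>i<d. E\<^sup>2)"
  proof (intro real_sqrt_le_mono sum_mono)
    fix i assume "i \<in> {..<d}"
    then have i: "i < d" by simp
    have "coeff (Rec d y - smult c p) i = ch d y i - c * coeff p i" using i by (simp add: coeff_Rec)
    then show "(cmod (coeff (Rec d y - smult c p) i))\<^sup>2 \<le> E\<^sup>2"
      using cerr[OF i] by (simp add: power_mono)
  qed
  also have "\<dots> = sqrt (real d) * E" using E0 by (simp add: real_sqrt_mult)
  finally have pn: "pnorm (Rec d y - smult c p) \<le> sqrt (real d) * E" .
  have cc: "cnj c * c = 1" using c1 by (metis complex_norm_square mult.commute of_real_1 power_one)
  have "p - smult (cnj c) (Rec d y) = smult (cnj c) (smult c p - Rec d y)"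
    using cc by (simp add: smult_diff_right)
  then have "pnorm (p - smult (cnj c) (Rec d y)) = pnorm (Rec d y - smult c p)"
    using c1 by (simp add: pnorm_smult pnorm_minus_comm)
  moreover have "rho p (Rec d y) \<le> pnorm (p - smult (cnj c) (Rec d y))" using c1 by (intro rho_le) simp
  ultimately have "rho p (Rec d y) \<le> sqrt (real d) * E" using pn by simp
  also have "E = (e / P) * (real N / b + real d * (real d - 1) * real N * (real N + 2) / b\<^sup>2)"
    unfolding E_def X_def using b0 P0 d by (simp add: field_simps power2_eq_square of_nat_diff)
  finally show ?thesis by (simp add: N_def b_def P_def)
qed


theorem mainTheorem1:
  fixes d :: nat and \<alpha> :: real
  assumes "d \<ge> 2" and "0 < \<alpha>" and "\<alpha> < 1"
  shows "\<exists>R :: (nat \<Rightarrow> real) \<Rightarrow> complex poly. (\<forall>x. R x \<in> Pd d) \<and>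
    (\<forall>p eps. p \<in> Pd d \<longrightarrow> p \<noteq> 0 \<longrightarrow>
       sup_norm d eps \<le> \<alpha> * (beta d * pnorm p)\<^sup>2 / real (2*d - 1) \<longrightarrow>
       (let pt = R (noisy_meas d p eps);
            e = sup_norm d eps;
            b = beta d;
            C = ((1 + sqrt 2) * real (2*d - 1) * e + real d * (pnorm p)\<^sup>2)
                / ((b * pnorm p)\<^sup>2 * (1 - \<alpha>))
        in rho p pt \<le>
           ((2 + sqrt 2) / (b\<^sup>2 * (1 - \<alpha>)) * ((real d - real d * C - 1 + C ^ d) / (1 - C)) * sqrt (real d)
            + (1 - C ^ d) / (2 * b * sqrt (1 / sqrt (real d) * (1 - \<alpha>))))
           * (real d * real (2*d - 1) / (1 - C)) * (e / pnorm p)))"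
proof -
  have d: "d \<ge> 2" and a0: "0 < \<alpha>" and a1: "\<alpha> < 1" using assms by auto
  have d1: "d \<ge> 1" using d by simp
  show ?thesis
  proof (rule exI[of _ "Rec d"], intro conjI allI impI)
    fix x show "Rec d x \<in> Pd d" using degree_Rec[OF d1] by (simp add: Pd_def)
  next
    fix p eps
    assume pP: "p \<in> Pd d" and p0: "p \<noteq> 0"
      and noise: "sup_norm d eps \<le> \<alpha> * (beta d * pnorm p)\<^sup>2 / real (2*d - 1)"
    have dp: "degree p < d" using pP by (simp add: Pd_def)
    define y where "y = noisy_meas d p eps"
    define e where "e = sup_norm d eps"
    define b where "b = beta d"
    define P where "P = pnorm p"
    define G where "G = real (2*d - 1)"
    define C where "C = ((1 + sqrt 2) * real (2*d - 1) * e + real d * P\<^sup>2) / ((b * P)\<^sup>2 * (1 - \<alpha>))"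
    have P0: "P > 0" using p0 by (simp add: P_def pnorm_pos)
    have b0: "b > 0" using beta_pos[OF d] by (simp add: b_def)
    have G0: "G > 0" using d by (simp add: G_def)
    have err: "\<bar>y l - meas d p l\<bar> \<le> e" if l: "l \<in> {1..3*(2*d-1)}" for l
    proof -
      have l': "l \<in> {1..6*d-3}" using l d by auto
      then have "y l = meas d p l + eps l" by (simp add: y_def noisy_meas_def)
      moreover have "\<bar>eps l\<bar> \<le> e" unfolding e_def sup_norm_def using l' by (intro Max_ge) auto
      ultimately show ?thesis by simp
    qed
    have e0: "0 \<le> e"
    proof -
      have "1 \<in> {1..3*(2*d-1)}" using d by auto
      from err[OF this] show ?thesis by (meson abs_ge_zero order_trans)
    qed
    have noise': "real (2*d-1) * e \<le> \<alpha> * (beta d * pnorm p)\<^sup>2"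
      using noise G0 by (simp add: e_def G_def pos_le_divide_eq mult.commute)
    have mb: "rho p (Rec d y) \<le> sqrt (real d) * ((e / P) * (G / b + real d * (real d - 1) * G * (G + 2) / b\<^sup>2))"
      using main_bound[OF d a1 dp p0 err noise'] by (simp add: G_def b_def P_def)
    have bs: "b \<le> 1 / (2 * real d * G)"
      using beta_small[OF d] d by (simp add: b_def G_def mult.assoc)
    have fa: "sqrt (real d) * (G / b + real d * (real d - 1) * G * (G + 2) / b\<^sup>2) \<le> real d ^ 2 * G / (2 * b ^ 3)"
      by (rule final_arith) (use d b0 bs in \<open>auto simp: G_def of_nat_diff\<close>)
    have b12: "b \<le> 1/12"
    proof -
      have "2 * 3 \<le> real d * G" using d by (intro mult_mono) (auto simp: G_def of_nat_diff)
      then have "1 / (2 * real d * G) \<le> 1/12" by (intro divide_left_mono) (auto simp: mult.assoc mult.commute)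
      then show ?thesis using bs by linarith
    qed
    have Cge: "real d / b\<^sup>2 \<le> C"
    proof -
      have den: "0 < (b * P)\<^sup>2 * (1 - \<alpha>)" using b0 P0 a1 by simp
      have "real d / b\<^sup>2 = real d * P\<^sup>2 / ((b * P)\<^sup>2 * 1)" using P0 by (simp add: power_mult_distrib)
      also have "\<dots> \<le> real d * P\<^sup>2 / ((b * P)\<^sup>2 * (1 - \<alpha>))"
        using a0 a1 b0 P0 by (intro divide_left_mono mult_left_mono) auto
      also have "\<dots> \<le> C" unfolding C_def using den e0 d by (intro divide_right_mono) auto
      finally show ?thesis .
    qed
    have kl: "real d ^ 2 * G / (2 * b ^ 3) \<le>
      ((2 + sqrt 2) / (b\<^sup>2 * (1 - \<alpha>)) * ((real d - real d * C - 1 + C ^ d) / (1 - C)) * sqrt (real d)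
        + (1 - C ^ d) / (2 * b * sqrt (1 / sqrt (real d) * (1 - \<alpha>)))) * (real d * G / (1 - C))"
      by (rule K_lower[OF d b0 b12 a0 a1 Cge G0])
    define K where "K = ((2 + sqrt 2) / (b\<^sup>2 * (1 - \<alpha>)) * ((real d - real d * C - 1 + C ^ d) / (1 - C)) * sqrt (real d)
        + (1 - C ^ d) / (2 * b * sqrt (1 / sqrt (real d) * (1 - \<alpha>)))) * (real d * G / (1 - C))"
    have eP: "0 \<le> e / P" using e0 P0 by simp
    have "rho p (Rec d y) \<le> (e / P) * (sqrt (real d) * (G / b + real d * (real d - 1) * G * (G + 2) / b\<^sup>2))"
      using mb by (simp add: mult_ac)
    also have "\<dots> \<le> (e / P) * K"
      using fa kl eP unfolding K_def by (intro mult_left_mono) auto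
    finally have fin: "rho p (Rec d y) \<le> K * (e / P)" by (simp add: mult.commute)
    show "let pt = Rec d (noisy_meas d p eps);
            e = sup_norm d eps;
            b = beta d;
            C = ((1 + sqrt 2) * real (2*d - 1) * e + real d * (pnorm p)\<^sup>2)
                / ((b * pnorm p)\<^sup>2 * (1 - \<alpha>))
        in rho p pt \<le>
           ((2 + sqrt 2) / (b\<^sup>2 * (1 - \<alpha>)) * ((real d - real d * C - 1 + C ^ d) / (1 - C)) * sqrt (real d)
            + (1 - C ^ d) / (2 * b * sqrt (1 / sqrt (real d) * (1 - \<alpha>))))
           * (real d * real (2*d - 1) / (1 - C)) * (e / pnorm p)"
      unfolding Let_def using fin
      by (simp only: K_def C_def G_def P_def b_def e_def y_def)
  qed
qed


end
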